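(* Let $G$ be a bipartite graph with bipartition $(A,B)$, and let $A$ be the union of disjoint sets $A_1,A_2$, each of which is laminar in $G$. Then the following are equivalent: (a) every hole of $G$ has length four; (b) there is a tree $T$ with $V(T)=B$ such that for each $a\in A$, $N(a)$ is the vertex set of a subtree of $T$.
   Context: A hole is an induced cycle of length at least four. $N(a)$ denotes the set of neighbours of $a$. A set $A'\subseteq A$ is laminar in $G$ if for all distinct $a,a'\in A'$, either $N(a)\subseteq N(a')$, or $N(a')\subseteq N(a)$, or $N(a)\cap N(a')=\emptyset$. *)

theory Defs
  imports Main
begin

definition graph :: "'v set \<Rightarrow> ('v \<Rightarrow> 'v \<Rightarrow> bool) \<Rightarrow> bool" where
  "graph V E \<longleftrightarrow> finite V \<and> (\<forall>x y. E x y \<longrightarrow> x \<in> V \<and> y \<in> V)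
     \<and> (\<forall>x y. E x y \<longrightarrow> E y x) \<and> (\<forall>x. \<not> E x x)"

definition bipartite_with :: "'v set \<Rightarrow> ('v \<Rightarrow> 'v \<Rightarrow> bool) \<Rightarrow> 'v set \<Rightarrow> 'v set \<Rightarrow> bool" where
  "bipartite_with V E A B \<longleftrightarrow> graph V E \<and> A \<union> B = V \<and> A \<inter> B = {}
     \<and> (\<forall>x y. E x y \<longrightarrow> (x \<in> A \<and> y \<in> B) \<or> (x \<in> B \<and> y \<in> A))"

definition nbhd :: "('v \<Rightarrow> 'v \<Rightarrow> bool) \<Rightarrow> 'v \<Rightarrow> 'v set" where
  "nbhd E a = {y. E a y}"

definition laminar :: "('v \<Rightarrow> 'v \<Rightarrow> bool) \<Rightarrow> 'v set \<Rightarrow> bool" where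
  "laminar E A' \<longleftrightarrow> (\<forall>a\<in>A'. \<forall>a'\<in>A'. a \<noteq> a' \<longrightarrow>
     nbhd E a \<subseteq> nbhd E a' \<or> nbhd E a' \<subseteq> nbhd E a \<or> nbhd E a \<inter> nbhd E a' = {})"

definition is_cycle :: "'v set \<Rightarrow> ('v \<Rightarrow> 'v \<Rightarrow> bool) \<Rightarrow> 'v list \<Rightarrow> bool" where
  "is_cycle V E vs \<longleftrightarrow> length vs \<ge> 3 \<and> distinct vs \<and> set vs \<subseteq> V
     \<and> (\<forall>i < length vs. E (vs ! i) (vs ! (Suc i mod length vs)))"

definition is_induced_cycle :: "'v set \<Rightarrow> ('v \<Rightarrow> 'v \<Rightarrow> bool) \<Rightarrow> 'v list \<Rightarrow> bool" where
  "is_induced_cycle V E vs \<longleftrightarrow> is_cycle V E vs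
     \<and> (\<forall>i < length vs. \<forall>j < length vs.
          E (vs ! i) (vs ! j) \<longrightarrow> j = Suc i mod length vs \<or> i = Suc j mod length vs)"

definition is_hole :: "'v set \<Rightarrow> ('v \<Rightarrow> 'v \<Rightarrow> bool) \<Rightarrow> 'v list \<Rightarrow> bool" where
  "is_hole V E vs \<longleftrightarrow> is_induced_cycle V E vs \<and> length vs \<ge> 4"

definition connected_set :: "('v \<Rightarrow> 'v \<Rightarrow> bool) \<Rightarrow> 'v set \<Rightarrow> bool" where
  "connected_set T S \<longleftrightarrow> (\<forall>x\<in>S. \<forall>y\<in>S. (\<lambda>u v. u \<in> S \<and> v \<in> S \<and> T u v)\<^sup>*\<^sup>* x y)"

definition is_tree :: "'v set \<Rightarrow> ('v \<Rightarrow> 'v \<Rightarrow> bool) \<Rightarrow> bool" where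
  "is_tree VT T \<longleftrightarrow> graph VT T \<and> connected_set T VT \<and> (\<nexists>vs. is_cycle VT T vs)"

text \<open>S is the vertex set of a subtree of tree (VT,T): S \<subseteq> VT and T[S] is connected
  (an induced connected subgraph of a tree is a tree).\<close>
definition subtree_vertex_set :: "'v set \<Rightarrow> ('v \<Rightarrow> 'v \<Rightarrow> bool) \<Rightarrow> 'v set \<Rightarrow> bool" where
  "subtree_vertex_set VT T S \<longleftrightarrow> S \<subseteq> VT \<and> connected_set T S"

end

theory Submission
  imports Defs
begin


definition padj :: "'v list \<Rightarrow> 'v \<Rightarrow> 'v \<Rightarrow> bool" where
  "padj xs x y \<longleftrightarrow> (\<exists>i. Suc i < length xs \<and> xs!i = x \<and> xs!Suc i = y)"

definition cadj :: "'v list \<Rightarrow> 'v \<Rightarrow> 'v \<Rightarrow> bool" where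
  "cadj xs x y \<longleftrightarrow> padj xs x y \<or> (xs \<noteq> [] \<and> x = last xs \<and> y = hd xs)"

lemma padj_set: "padj xs x y \<Longrightarrow> x \<in> set xs \<and> y \<in> set xs"
  unfolding padj_def by auto

lemma cadj_set: "cadj xs x y \<Longrightarrow> x \<in> set xs \<and> y \<in> set xs"
  unfolding cadj_def by (meson padj_set last_in_set hd_in_set)

lemma cadj_idx: "xs \<noteq> [] \<Longrightarrow> cadj xs x y \<longleftrightarrow> (\<exists>i<length xs. xs!i = x \<and> xs!(Suc i mod length xs) = y)"
proof
  assume ne: "xs \<noteq> []" and c: "cadj xs x y"
  show "\<exists>i<length xs. xs!i = x \<and> xs!(Suc i mod length xs) = y"
  proof (cases "padj xs x y")
    case True
    then obtain i where "Suc i < length xs" "xs!i = x" "xs!Suc i = y" unfolding padj_def by auto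
    then show ?thesis by (intro exI[of _ i]) auto
  next
    case False
    then have "x = last xs" "y = hd xs" using c ne unfolding cadj_def by auto
    then show ?thesis using ne
      by (intro exI[of _ "length xs - 1"]) (auto simp: last_conv_nth hd_conv_nth)
  qed
next
  assume ne: "xs \<noteq> []" and "\<exists>i<length xs. xs!i = x \<and> xs!(Suc i mod length xs) = y"
  then obtain i where i: "i < length xs" "xs!i = x" "xs!(Suc i mod length xs) = y" by auto
  show "cadj xs x y"
  proof (cases "Suc i < length xs")
    case True
    then show ?thesis using i unfolding cadj_def padj_def by auto
  next
    case False
    then have "i = length xs - 1" using i by auto
    then show ?thesis using i ne unfolding cadj_def
      by (auto simp: last_conv_nth hd_conv_nth)
  qed
qed

lemma padj_append: "padj (xs @ ys) x y \<longleftrightarrow> padj xs x y \<or> padj ys x y \<or> (xs \<noteq> [] \<and> ys \<noteq> [] \<and> x = last xs \<and> y = hd ys)"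
proof
  assume "padj (xs @ ys) x y"
  then obtain i where i: "Suc i < length (xs@ys)" "(xs@ys)!i = x" "(xs@ys)!Suc i = y" unfolding padj_def by auto
  consider "Suc i < length xs" | "Suc i = length xs" | "i \<ge> length xs" by linarith
  then show "padj xs x y \<or> padj ys x y \<or> (xs \<noteq> [] \<and> ys \<noteq> [] \<and> x = last xs \<and> y = hd ys)"
  proof cases
    case 1
    then have "xs!i = x" "xs!Suc i = y" using i by (auto simp: nth_append)
    then have "padj xs x y" unfolding padj_def using 1 by blast
    then show ?thesis by blast
  next
    case 2 then have ii: "i = length xs - 1" "xs \<noteq> []" "ys \<noteq> []" using i(1) by auto
    then have "x = last xs" using i(2) 2 by (simp add: nth_append last_conv_nth)
    moreover have "y = hd ys" using i(3) 2 ii by (simp add: nth_append hd_conv_nth)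
    ultimately show ?thesis using ii by blast
  next
    case 3
    then have "ys!(i - length xs) = x" "ys!Suc (i - length xs) = y" "Suc (i - length xs) < length ys"
      using i by (auto simp: nth_append Suc_diff_le)
    then have "padj ys x y" unfolding padj_def by blast
    then show ?thesis by blast
  qed
next
  assume "padj xs x y \<or> padj ys x y \<or> (xs \<noteq> [] \<and> ys \<noteq> [] \<and> x = last xs \<and> y = hd ys)"
  then consider "padj xs x y" | "padj ys x y" | "xs \<noteq> []" "ys \<noteq> []" "x = last xs" "y = hd ys" by auto
  then show "padj (xs @ ys) x y"
  proof cases
    case 1
    then obtain i where i: "Suc i < length xs" "xs!i = x" "xs!Suc i = y" unfolding padj_def by auto
    then have "(xs@ys)!i = x" "(xs@ys)!Suc i = y" "Suc i < length (xs@ys)" by (auto simp: nth_append)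
    then show ?thesis unfolding padj_def by blast
  next
    case 2
    then obtain i where i: "Suc i < length ys" "ys!i = x" "ys!Suc i = y" unfolding padj_def by auto
    then have "(xs@ys)!(i + length xs) = x" "(xs@ys)!Suc (i + length xs) = y" "Suc (i + length xs) < length (xs@ys)"
      by (auto simp: nth_append)
    then show ?thesis unfolding padj_def by blast
  next
    case 3
    then have "(xs@ys)!(length xs - 1) = x" "(xs@ys)!Suc (length xs - 1) = y" "Suc (length xs - 1) < length (xs@ys)"
      by (auto simp: nth_append last_conv_nth hd_conv_nth)
    then show ?thesis unfolding padj_def by blast
  qed
qed

lemma is_cycle_alt: "is_cycle V E vs \<longleftrightarrow> 3 \<le> length vs \<and> distinct vs \<and> set vs \<subseteq> V \<and> (\<forall>x y. cadj vs x y \<longrightarrow> E x y)"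
proof (cases "vs = []")
  case False
  have "(\<forall>x y. cadj vs x y \<longrightarrow> E x y) \<longleftrightarrow> (\<forall>i < length vs. E (vs ! i) (vs ! (Suc i mod length vs)))"
    unfolding cadj_idx[OF False] by blast
  then show ?thesis unfolding is_cycle_def by auto
qed (auto simp: is_cycle_def)

lemma is_induced_cycle_alt: "is_induced_cycle V E vs \<longleftrightarrow> is_cycle V E vs \<and> (\<forall>x\<in>set vs. \<forall>y\<in>set vs. E x y \<longrightarrow> cadj vs x y \<or> cadj vs y x)"
proof (cases "is_cycle V E vs")
  case True
  then have d: "distinct vs" and ne: "vs \<noteq> []" unfolding is_cycle_def by auto
  have "(\<forall>i < length vs. \<forall>j < length vs.
          E (vs ! i) (vs ! j) \<longrightarrow> j = Suc i mod length vs \<or> i = Suc j mod length vs) \<longleftrightarrow>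
        (\<forall>x\<in>set vs. \<forall>y\<in>set vs. E x y \<longrightarrow> cadj vs x y \<or> cadj vs y x)"
  proof
    assume H: "\<forall>i < length vs. \<forall>j < length vs.
          E (vs ! i) (vs ! j) \<longrightarrow> j = Suc i mod length vs \<or> i = Suc j mod length vs"
    show "\<forall>x\<in>set vs. \<forall>y\<in>set vs. E x y \<longrightarrow> cadj vs x y \<or> cadj vs y x"
    proof (intro ballI impI)
      fix x y assume "x \<in> set vs" "y \<in> set vs" "E x y"
      then obtain i j where "i < length vs" "j < length vs" "vs!i = x" "vs!j = y"
        by (metis in_set_conv_nth)
      then have "j = Suc i mod length vs \<or> i = Suc j mod length vs" using H `E x y` by blast
      then show "cadj vs x y \<or> cadj vs y x" unfolding cadj_idx[OF ne]
        using `i < length vs` `j < length vs` `vs!i = x` `vs!j = y` by blast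
    qed
  next
    assume H: "\<forall>x\<in>set vs. \<forall>y\<in>set vs. E x y \<longrightarrow> cadj vs x y \<or> cadj vs y x"
    show "\<forall>i < length vs. \<forall>j < length vs.
          E (vs ! i) (vs ! j) \<longrightarrow> j = Suc i mod length vs \<or> i = Suc j mod length vs"
    proof (intro allI impI)
      fix i j assume ij: "i < length vs" "j < length vs" "E (vs!i) (vs!j)"
      then have "cadj vs (vs!i) (vs!j) \<or> cadj vs (vs!j) (vs!i)" using H by auto
      then show "j = Suc i mod length vs \<or> i = Suc j mod length vs"
      proof
        assume "cadj vs (vs!i) (vs!j)"
        then obtain k where k: "k < length vs" "vs!k = vs!i" "vs!(Suc k mod length vs) = vs!j"
          using cadj_idx[OF ne] by metis
        have "k = i" using k(1,2) ij(1) nth_eq_iff_index_eq[OF d] by blast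
        moreover have "Suc k mod length vs = j"
        proof -
          have "0 < length vs" using k(1) by linarith
          then have "Suc k mod length vs < length vs" by (rule mod_less_divisor)
          then show ?thesis using k(3) ij(2) nth_eq_iff_index_eq[OF d] by blast
        qed
        ultimately show ?thesis by simp
      next
        assume "cadj vs (vs!j) (vs!i)"
        then obtain k where k: "k < length vs" "vs!k = vs!j" "vs!(Suc k mod length vs) = vs!i"
          using cadj_idx[OF ne] by metis
        have "k = j" using k(1,2) ij(2) nth_eq_iff_index_eq[OF d] by blast
        moreover have "Suc k mod length vs = i"
        proof -
          have "0 < length vs" using k(1) by linarith
          then have "Suc k mod length vs < length vs" by (rule mod_less_divisor)
          then show ?thesis using k(3) ij(1) nth_eq_iff_index_eq[OF d] by blast
        qed
        ultimately show ?thesis by simp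
      qed
    qed
  qed
  then show ?thesis unfolding is_induced_cycle_def by auto
next
  case False
  then show ?thesis unfolding is_induced_cycle_def by auto
qed

definition ipath :: "('v \<Rightarrow> 'v \<Rightarrow> bool) \<Rightarrow> 'v list \<Rightarrow> bool" where
  "ipath E xs \<longleftrightarrow> distinct xs \<and> (\<forall>x y. padj xs x y \<longrightarrow> E x y)
     \<and> (\<forall>x\<in>set xs. \<forall>y\<in>set xs. E x y \<longrightarrow> padj xs x y \<or> padj xs y x)"

lemma cadj_append: "P \<noteq> [] \<Longrightarrow> Q \<noteq> [] \<Longrightarrow> cadj (P @ Q) x y \<longleftrightarrow>
   padj P x y \<or> padj Q x y \<or> (x = last P \<and> y = hd Q) \<or> (x = last Q \<and> y = hd P)"
  unfolding cadj_def padj_append by auto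

lemma cycle_of_paths:
  assumes "ipath E P" "ipath E Q" "P \<noteq> []" "Q \<noteq> []" "set P \<inter> set Q = {}"
    "E (last P) (hd Q)" "E (last Q) (hd P)"
    "\<And>x y. x \<in> set P \<Longrightarrow> y \<in> set Q \<Longrightarrow> E x y \<or> E y x \<Longrightarrow> (x = last P \<and> y = hd Q) \<or> (x = hd P \<and> y = last Q)"
    "3 \<le> length P + length Q" "set P \<union> set Q \<subseteq> V"
  shows "is_induced_cycle V E (P @ Q)"
proof -
  have c: "is_cycle V E (P @ Q)" unfolding is_cycle_alt
    using assms unfolding ipath_def cadj_append[OF assms(3,4)] by auto
  have "\<forall>x\<in>set (P@Q). \<forall>y\<in>set (P@Q). E x y \<longrightarrow> cadj (P@Q) x y \<or> cadj (P@Q) y x"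
  proof (intro ballI impI)
    fix x y assume xy: "x \<in> set (P @ Q)" "y \<in> set (P @ Q)" and e: "E x y"
    have "padj P x y \<or> padj Q x y \<or> (x = last P \<and> y = hd Q) \<or> (x = last Q \<and> y = hd P) \<or>
          padj P y x \<or> padj Q y x \<or> (y = last P \<and> x = hd Q) \<or> (y = last Q \<and> x = hd P)"
    proof (cases "x \<in> set P")
      case True
      then show ?thesis
      proof (cases "y \<in> set P")
        case True then show ?thesis using `x \<in> set P` xy e assms(1) by (auto simp: ipath_def cadj_append[OF assms(3,4)])
      next
        case False then have "y \<in> set Q" using xy by auto
        then show ?thesis using assms(8)[of x y] `x \<in> set P` xy e by (auto simp: cadj_append[OF assms(3,4)])
      qed
    next
      case False
      then have xQ: "x \<in> set Q" using xy by auto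
      show ?thesis
      proof (cases "y \<in> set P")
        case True then show ?thesis using assms(8)[of y x] xQ xy e by (auto simp: cadj_append[OF assms(3,4)])
      next
        case False then have "y \<in> set Q" using xy by auto
        then show ?thesis using xQ xy e assms(2) by (auto simp: ipath_def cadj_append[OF assms(3,4)])
      qed
    qed
    then show "cadj (P@Q) x y \<or> cadj (P@Q) y x" unfolding cadj_append[OF assms(3,4)] by blast
  qed
  then show ?thesis using c by (simp add: is_induced_cycle_alt)
qed

lemma induced_cycle_map:
  assumes "is_induced_cycle V E vs" "inj_on g (set vs)" "g ` set vs \<subseteq> V'"
    "\<And>x y. x \<in> set vs \<Longrightarrow> y \<in> set vs \<Longrightarrow> E' (g x) (g y) \<longleftrightarrow> E x y"
  shows "is_induced_cycle V' E' (map g vs)"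
proof -
  have m: "\<And>i. i < length vs \<Longrightarrow> Suc i mod length vs < length vs"
    by (metis mod_less_divisor gr_zeroI less_nat_zero_code)
  have d: "distinct vs" "3 \<le> length vs" using assms(1) unfolding is_induced_cycle_def is_cycle_def by auto
  have c: "is_cycle V' E' (map g vs)" unfolding is_cycle_def
  proof (intro conjI allI impI)
    show "distinct (map g vs)" using d assms(2) by (simp add: distinct_map)
    show "set (map g vs) \<subseteq> V'" using assms(3) by simp
    show "3 \<le> length (map g vs)" using d by simp
    fix i assume i: "i < length (map g vs)"
    then have "E (vs!i) (vs!(Suc i mod length vs))" using assms(1) unfolding is_induced_cycle_def is_cycle_def by auto
    then show "E' (map g vs ! i) (map g vs ! (Suc i mod length (map g vs)))"
      using assms(4) i m[of i] by simp
  qed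
  show ?thesis unfolding is_induced_cycle_def
  proof (intro conjI c allI impI)
    fix i j assume ij: "i < length (map g vs)" "j < length (map g vs)" "E' (map g vs ! i) (map g vs ! j)"
    then have "E (vs!i) (vs!j)" using assms(4) by simp
    then show "j = Suc i mod length (map g vs) \<or> i = Suc j mod length (map g vs)"
      using assms(1) ij unfolding is_induced_cycle_def by simp
  qed
qed



definition walk :: "('v \<Rightarrow> 'v \<Rightarrow> bool) \<Rightarrow> 'v list \<Rightarrow> bool" where
  "walk R xs \<longleftrightarrow> xs \<noteq> [] \<and> (\<forall>i. Suc i < length xs \<longrightarrow> R (xs!i) (xs!Suc i))"

lemma rtranclp_walk: "R\<^sup>*\<^sup>* x y \<Longrightarrow> \<exists>xs. walk R xs \<and> hd xs = x \<and> last xs = y"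
proof (induction rule: rtranclp_induct)
  case base
  then show ?case by (intro exI[of _ "[x]"]) (auto simp: walk_def)
next
  case (step y z)
  then obtain xs where xs: "walk R xs" "hd xs = x" "last xs = y" by auto
  have "walk R (xs @ [z])" unfolding walk_def
  proof (intro conjI allI impI)
    show "xs @ [z] \<noteq> []" by simp
    fix i assume i: "Suc i < length (xs @ [z])"
    show "R ((xs @ [z]) ! i) ((xs @ [z]) ! Suc i)"
    proof (cases "Suc i < length xs")
      case True then show ?thesis using xs(1) unfolding walk_def by (auto simp: nth_append)
    next
      case False
      then have "i = length xs - 1" "xs \<noteq> []" using i xs(1) unfolding walk_def by auto
      then show ?thesis using step(2) xs(3) by (auto simp: nth_append last_conv_nth)
    qed
  qed
  then show ?case using xs by (intro exI[of _ "xs @ [z]"]) (auto simp: walk_def)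
qed

lemma walk_reach: "walk R xs \<Longrightarrow> i < length xs \<Longrightarrow> R\<^sup>*\<^sup>* (hd xs) (xs!i)"
proof (induction i)
  case 0 then show ?case by (simp add: hd_conv_nth walk_def)
next
  case (Suc i)
  then have "R (xs!i) (xs!Suc i)" unfolding walk_def by auto
  then show ?case using Suc by (meson Suc_lessD rtranclp.rtrancl_into_rtrancl)
qed

lemma walk_reach_last: "walk R xs \<Longrightarrow> R\<^sup>*\<^sup>* (hd xs) (last xs)"
  using walk_reach[of R xs "length xs - 1"] by (simp add: last_conv_nth walk_def)


lemma walk_short_eq:
  assumes w: "walk R xs" and ij: "i < j" "j < length xs" and eq: "xs!i = xs!j"
  shows "walk R (take i xs @ drop j xs) \<and> hd (take i xs @ drop j xs) = hd xs
         \<and> last (take i xs @ drop j xs) = last xs \<and> length (take i xs @ drop j xs) < length xs"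
proof -
  let ?ys = "take i xs @ drop j xs"
  have len: "length ?ys = length xs - j + i" using ij by simp
  have nth: "\<And>k. k < length ?ys \<Longrightarrow> ?ys!k = (if k < i then xs!k else xs!(k - i + j))"
    using ij by (auto simp: nth_append add.commute)
  have "walk R ?ys" unfolding walk_def
  proof (intro conjI allI impI)
    show "?ys \<noteq> []" using ij by simp
    fix k assume k: "Suc k < length ?ys"
    show "R (?ys!k) (?ys!Suc k)"
    proof (cases "Suc k < i")
      case True then show ?thesis using nth k w ij unfolding walk_def by auto
    next
      case False
      show ?thesis
      proof (cases "Suc k = i")
        case True
        then have "?ys!k = xs!k" "?ys!Suc k = xs!j" using nth k by auto
        moreover have "R (xs!k) (xs!i)" using w True ij unfolding walk_def by auto
        ultimately show ?thesis using eq by simp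
      next
        case False
        have kk: "i \<le> k" "Suc k - i + j = Suc (k - i + j)" using False `\<not> Suc k < i` by auto
        have "?ys!k = xs!(k - i + j)" using nth[of k] k kk by auto
        moreover have "?ys!Suc k = xs!(Suc (k - i + j))" using nth[of "Suc k"] k kk by auto
        moreover have "Suc (k - i + j) < length xs" using k len kk ij by linarith
        ultimately show ?thesis using w unfolding walk_def by auto
      qed
    qed
  qed
  moreover have "hd ?ys = hd xs"
  proof (cases i)
    case 0 then show ?thesis using ij eq w by (simp add: hd_drop_conv_nth hd_conv_nth walk_def)
  next
    case (Suc n) then show ?thesis using ij w by (simp add: hd_append2 hd_take walk_def)
  qed
  moreover have "last ?ys = last xs" using ij by simp
  ultimately show ?thesis using len ij by auto
qed

lemma walk_short_edge:
  assumes w: "walk R xs" and ij: "Suc i < j" "j < length xs" and e: "R (xs!i) (xs!j)"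
  shows "walk R (take (Suc i) xs @ drop j xs) \<and> hd (take (Suc i) xs @ drop j xs) = hd xs
         \<and> last (take (Suc i) xs @ drop j xs) = last xs \<and> length (take (Suc i) xs @ drop j xs) < length xs"
proof -
  let ?ys = "take (Suc i) xs @ drop j xs"
  have len: "length ?ys = length xs - j + Suc i" using ij by simp
  have nth: "\<And>k. k < length ?ys \<Longrightarrow> ?ys!k = (if k < Suc i then xs!k else xs!(k - Suc i + j))"
    using ij by (auto simp: nth_append add.commute)
  have "walk R ?ys" unfolding walk_def
  proof (intro conjI allI impI)
    show "?ys \<noteq> []" using ij by simp
    fix k assume k: "Suc k < length ?ys"
    show "R (?ys!k) (?ys!Suc k)"
    proof (cases "Suc k < Suc i")
      case True then show ?thesis using nth k w ij unfolding walk_def by auto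
    next
      case False
      show ?thesis
      proof (cases "k = i")
        case True
        then have "?ys!k = xs!i" "?ys!Suc k = xs!j" using nth k by auto
        then show ?thesis using e by simp
      next
        case False
        have kk: "Suc i \<le> k" "Suc k - Suc i + j = Suc (k - Suc i + j)" using False `\<not> Suc k < Suc i` by auto
        have "?ys!k = xs!(k - Suc i + j)" using nth[of k] k kk by auto
        moreover have "?ys!Suc k = xs!(Suc (k - Suc i + j))" using nth[of "Suc k"] k kk by auto
        moreover have "Suc (k - Suc i + j) < length xs" using k len kk ij by linarith
        ultimately show ?thesis using w unfolding walk_def by auto
      qed
    qed
  qed
  moreover have "hd ?ys = hd xs" using ij w by (simp add: hd_append2 hd_take walk_def)
  moreover have "last ?ys = last xs" using ij by simp
  ultimately show ?thesis using len ij by auto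
qed

lemma walk_drop:
  assumes w: "walk R xs" and i: "i < length xs"
  shows "walk R (drop i xs) \<and> hd (drop i xs) = xs!i \<and> last (drop i xs) = last xs"
  using assms unfolding walk_def by (auto simp: hd_drop_conv_nth)

lemma walk_take:
  assumes w: "walk R xs" and i: "i < length xs"
  shows "walk R (take (Suc i) xs) \<and> hd (take (Suc i) xs) = hd xs \<and> last (take (Suc i) xs) = xs!i"
  using assms unfolding walk_def by (auto simp: last_conv_nth hd_conv_nth)

lemma min_walk:
  assumes sym: "\<And>x y. R x y \<Longrightarrow> R y x" and irr: "\<And>x. \<not> R x x"
    and w: "walk R xs" "hd xs \<in> S1" "last xs \<in> S2"
  obtains ys where "walk R ys" "hd ys \<in> S1" "last ys \<in> S2" "distinct ys"
    "\<And>i j. i < length ys \<Longrightarrow> j < length ys \<Longrightarrow> R (ys!i) (ys!j) \<Longrightarrow> j = Suc i \<or> i = Suc j"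
    "\<And>i. i < length ys \<Longrightarrow> ys!i \<in> S1 \<Longrightarrow> i = 0"
    "\<And>i. i < length ys \<Longrightarrow> ys!i \<in> S2 \<Longrightarrow> i = length ys - 1"
proof -
  let ?P = "\<lambda>ys. walk R ys \<and> hd ys \<in> S1 \<and> last ys \<in> S2"
  obtain ys where ys: "?P ys" and minl: "\<And>zs. ?P zs \<Longrightarrow> length ys \<le> length zs"
    using ex_has_least_nat[of ?P xs length] w by blast
  have ne: "ys \<noteq> []" using ys walk_def by auto
  have d: "distinct ys"
  proof (rule ccontr)
    assume "\<not> distinct ys"
    then obtain i j where ij: "i < j" "j < length ys" "ys!i = ys!j"
      by (metis distinct_conv_nth linorder_neqE_nat)
    have "walk R (take i ys @ drop j ys) \<and> hd (take i ys @ drop j ys) = hd ys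
         \<and> last (take i ys @ drop j ys) = last ys \<and> length (take i ys @ drop j ys) < length ys"
      using walk_short_eq[OF _ ij] ys by blast
    then show False using ys minl[of "take i ys @ drop j ys"] by auto
  qed
  have ch: "j = Suc i \<or> i = Suc j" if ij: "i < length ys" "j < length ys" "R (ys!i) (ys!j)" for i j
  proof (rule ccontr)
    assume nc: "\<not> (j = Suc i \<or> i = Suc j)"
    show False
    proof (cases "i < j")
      case True
      then have "Suc i < j" using nc by auto
      then show False using walk_short_edge[of R ys i j] ij ys minl[of "take (Suc i) ys @ drop j ys"] by auto
    next
      case False
      show False
      proof (cases "i = j")
        case True
        then show False using ij irr by auto
      next
        case False
        then have "Suc j < i" using nc `\<not> i < j` by auto
        then show False using walk_short_edge[of R ys j i] sym[OF ij(3)] ij ys minl[of "take (Suc j) ys @ drop i ys"] by auto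
      qed
    qed
  qed
  have s1: "i = 0" if i: "i < length ys" "ys!i \<in> S1" for i
  proof (rule ccontr)
    assume "i \<noteq> 0"
    then show False using walk_drop[OF _ i(1)] ys i minl[of "drop i ys"] by auto
  qed
  have s2: "i = length ys - 1" if i: "i < length ys" "ys!i \<in> S2" for i
  proof (rule ccontr)
    assume "i \<noteq> length ys - 1"
    then show False using walk_take[OF _ i(1)] ys i minl[of "take (Suc i) ys"] by auto
  qed
  show ?thesis
    apply (rule that[of ys])
    using ys d ch s1 s2 by auto
qed



lemma suc_mod_val:
  assumes "i < n"
  shows "Suc i mod n = (if Suc i = n then 0 else Suc i)"
  using assms by auto

lemma suc_mod_lt: "i < n \<Longrightarrow> Suc i mod n < n"
  by (metis gr_implies_not0 mod_less_divisor neq0_conv)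

lemma suc_mod_inj: "i < n \<Longrightarrow> j < n \<Longrightarrow> Suc i mod n = Suc j mod n \<Longrightarrow> i = j"
  using suc_mod_val[of i n] suc_mod_val[of j n] by (auto split: if_splits)

lemma cadj_unique1: "distinct vs \<Longrightarrow> cadj vs x y \<Longrightarrow> cadj vs x y' \<Longrightarrow> y = y'"
proof -
  assume d: "distinct vs" and c1: "cadj vs x y" and c2: "cadj vs x y'"
  have ne: "vs \<noteq> []" using c1 cadj_set by fastforce
  obtain i where i: "i < length vs" "vs!i = x" "vs!(Suc i mod length vs) = y" using c1 cadj_idx[OF ne] by metis
  obtain j where j: "j < length vs" "vs!j = x" "vs!(Suc j mod length vs) = y'" using c2 cadj_idx[OF ne] by metis
  have "i = j" using i(2) j(2) nth_eq_iff_index_eq[OF d i(1) j(1)] by simp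
  then show ?thesis using i j by simp
qed

lemma cadj_unique2: "distinct vs \<Longrightarrow> cadj vs x y \<Longrightarrow> cadj vs x' y \<Longrightarrow> x = x'"
proof -
  assume d: "distinct vs" and c1: "cadj vs x y" and c2: "cadj vs x' y"
  have ne: "vs \<noteq> []" using c1 cadj_set by fastforce
  have p: "0 < length vs" using ne by simp
  obtain i where i: "i < length vs" "vs!i = x" "vs!(Suc i mod length vs) = y" using c1 cadj_idx[OF ne] by metis
  obtain j where j: "j < length vs" "vs!j = x'" "vs!(Suc j mod length vs) = y" using c2 cadj_idx[OF ne] by metis
  have "Suc i mod length vs = Suc j mod length vs"
    using i(3) j(3) nth_eq_iff_index_eq[OF d suc_mod_lt[OF i(1)] suc_mod_lt[OF j(1)]] by simp
  then have "i = j" using i(1) j(1) suc_mod_inj by blast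
  then show ?thesis using i j by simp
qed

lemma cadj_ex1: "x \<in> set vs \<Longrightarrow> \<exists>y. cadj vs x y"
proof -
  assume "x \<in> set vs"
  then obtain i where i: "i < length vs" "vs!i = x" by (metis in_set_conv_nth)
  then have ne: "vs \<noteq> []" by auto
  show ?thesis using i cadj_idx[OF ne] by blast
qed

lemma cadj_ex2: "x \<in> set vs \<Longrightarrow> \<exists>z. cadj vs z x"
proof -
  assume "x \<in> set vs"
  then obtain i where i: "i < length vs" "vs!i = x" by (metis in_set_conv_nth)
  then have ne: "vs \<noteq> []" by auto
  show ?thesis
  proof (cases i)
    case 0
    then have "cadj vs (last vs) x" using i ne unfolding cadj_def by (simp add: hd_conv_nth)
    then show ?thesis by blast
  next
    case (Suc k)
    then have "padj vs (vs!k) x" using i unfolding padj_def by blast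
    then show ?thesis unfolding cadj_def by blast
  qed
qed

lemma cadj_idx_val:
  assumes "i < length vs" "1 < length vs"
  shows "Suc i mod length vs = (if Suc i = length vs then 0 else Suc i)"
  using assms by auto

lemma cadj_not_refl: "distinct vs \<Longrightarrow> 2 \<le> length vs \<Longrightarrow> \<not> cadj vs x x"
proof
  assume d: "distinct vs" and l: "2 \<le> length vs" and c: "cadj vs x x"
  have ne: "vs \<noteq> []" using l by auto
  obtain i where i: "i < length vs" "vs!i = x" "vs!(Suc i mod length vs) = x" using c cadj_idx[OF ne] by metis
  have p: "0 < length vs" using ne by simp
  have "Suc i mod length vs = i" using i nth_eq_iff_index_eq[OF d suc_mod_lt[OF i(1)] i(1)] by simp
  then show False using i(1) l suc_mod_val[of i "length vs"] by (auto split: if_splits)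
qed

lemma cadj_not_sym: "distinct vs \<Longrightarrow> 3 \<le> length vs \<Longrightarrow> cadj vs x y \<Longrightarrow> \<not> cadj vs y x"
proof
  assume d: "distinct vs" and l: "3 \<le> length vs" and c: "cadj vs x y" and c2: "cadj vs y x"
  have ne: "vs \<noteq> []" using l by auto
  have p: "0 < length vs" using ne by simp
  obtain i where i: "i < length vs" "vs!i = x" "vs!(Suc i mod length vs) = y" using c cadj_idx[OF ne] by metis
  obtain j where j: "j < length vs" "vs!j = y" "vs!(Suc j mod length vs) = x" using c2 cadj_idx[OF ne] by metis
  have 1: "Suc i mod length vs = j" using i j nth_eq_iff_index_eq[OF d suc_mod_lt[OF i(1)] j(1)] by simp
  have 2: "Suc j mod length vs = i" using i j nth_eq_iff_index_eq[OF d suc_mod_lt[OF j(1)] i(1)] by simp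
  show False using 1 2 i(1) j(1) l suc_mod_val[of i "length vs"] suc_mod_val[of j "length vs"] by (auto split: if_splits)
qed

definition hn :: "('v \<Rightarrow> 'v \<Rightarrow> bool) \<Rightarrow> 'v list \<Rightarrow> 'v \<Rightarrow> 'v set" where
  "hn E vs x = {y \<in> set vs. E x y}"

lemma hn_two:
  assumes ic: "is_induced_cycle V E vs" and sym: "\<And>x y. E x y \<Longrightarrow> E y x" and x: "x \<in> set vs"
  shows "\<exists>y z. y \<noteq> z \<and> hn E vs x = {y, z}"
proof -
  have cy: "is_cycle V E vs" and ind: "\<forall>x\<in>set vs. \<forall>y\<in>set vs. E x y \<longrightarrow> cadj vs x y \<or> cadj vs y x"
    using ic unfolding is_induced_cycle_alt by auto
  have d: "distinct vs" and l: "3 \<le> length vs" and e: "\<And>x y. cadj vs x y \<Longrightarrow> E x y"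
    using cy unfolding is_cycle_alt by auto
  obtain y where y: "cadj vs x y" using cadj_ex1[OF x] by blast
  obtain z where z: "cadj vs z x" using cadj_ex2[OF x] by blast
  have "y \<noteq> z" using cadj_not_sym[OF d l y] z by blast
  moreover have "hn E vs x = {y, z}"
  proof
    show "hn E vs x \<subseteq> {y, z}"
    proof
      fix u assume "u \<in> hn E vs x"
      then have "u \<in> set vs" "E x u" unfolding hn_def by auto
      then have "cadj vs x u \<or> cadj vs u x" using ind x by blast
      then show "u \<in> {y, z}" using cadj_unique1[OF d y] cadj_unique2[OF d z] by blast
    qed
    show "{y, z} \<subseteq> hn E vs x"
      using e[OF y] sym[OF e[OF z]] cadj_set[OF y] cadj_set[OF z] unfolding hn_def by auto
  qed
  ultimately show ?thesis by blast
qed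

lemma closed_all:
  assumes ne: "S \<noteq> {}" and sub: "S \<subseteq> set vs" and cl: "\<And>x y. x \<in> S \<Longrightarrow> cadj vs x y \<Longrightarrow> y \<in> S"
  shows "set vs \<subseteq> S"
proof -
  obtain x where x: "x \<in> S" using ne by auto
  then obtain i where i: "i < length vs" "vs!i = x" using sub by (metis in_set_conv_nth subsetD)
  have nev: "vs \<noteq> []" using i by auto
  have p: "0 < length vs" using i by linarith
  have k: "vs!((i + k) mod length vs) \<in> S" for k
  proof (induction k)
    case 0 then show ?case using i x by simp
  next
    case (Suc k)
    have "(i + k) mod length vs < length vs" using p by simp
    then have "cadj vs (vs!((i + k) mod length vs)) (vs!(Suc ((i + k) mod length vs) mod length vs))"
      using cadj_idx[OF nev] by blast
    moreover have "Suc ((i + k) mod length vs) mod length vs = (i + Suc k) mod length vs"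
      by (simp add: mod_Suc_eq)
    ultimately show ?case using cl Suc by metis
  qed
  show ?thesis
  proof
    fix y assume "y \<in> set vs"
    then obtain j where j: "j < length vs" "vs!j = y" by (metis in_set_conv_nth)
    have "(i + (length vs - i + j)) mod length vs = j" using i j by simp
    then show "y \<in> S" using k[of "length vs - i + j"] j by simp
  qed
qed



lemma padj_walk: "walk R xs \<Longrightarrow> padj xs x y \<Longrightarrow> R x y"
  unfolding walk_def padj_def by auto

lemma padj_drop: "padj (drop j xs) x y \<Longrightarrow> padj xs x y"
  using padj_append[of "take j xs" "drop j xs" x y] by simp

lemma rtranclp_sym: "(\<And>x y. R x y \<Longrightarrow> R y x) \<Longrightarrow> R\<^sup>*\<^sup>* x y \<Longrightarrow> R\<^sup>*\<^sup>* y x"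
proof -
  assume s: "\<And>x y. R x y \<Longrightarrow> R y x" and r: "R\<^sup>*\<^sup>* x y"
  from r show ?thesis
  proof (induction rule: rtranclp_induct)
    case base then show ?case by simp
  next
    case (step y z) then show ?case using s by (meson converse_rtranclp_into_rtranclp)
  qed
qed

lemma connected_via_root:
  assumes sym: "\<And>x y. T x y \<Longrightarrow> T y x" and r: "\<And>x. x \<in> S \<Longrightarrow> (\<lambda>u v. u \<in> S \<and> v \<in> S \<and> T u v)\<^sup>*\<^sup>* r x"
  shows "connected_set T S"
  unfolding connected_set_def
proof (intro ballI)
  fix x y assume "x \<in> S" "y \<in> S"
  let ?R = "\<lambda>u v. u \<in> S \<and> v \<in> S \<and> T u v"
  have "?R\<^sup>*\<^sup>* x r" using rtranclp_sym[of ?R r x] r[OF `x \<in> S`] sym by blast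
  then show "?R\<^sup>*\<^sup>* x y" using r[OF `y \<in> S`] by auto
qed

lemma graph_sym: "graph V E \<Longrightarrow> E x y \<Longrightarrow> E y x"
  unfolding graph_def by blast

lemma graph_irr: "graph V E \<Longrightarrow> \<not> E x x"
  unfolding graph_def by blast

lemma graph_in: "graph V E \<Longrightarrow> E x y \<Longrightarrow> x \<in> V \<and> y \<in> V"
  unfolding graph_def by blast

lemma tree_leaf:
  assumes t: "is_tree B T" and xy: "x \<in> B" "y \<in> B" "x \<noteq> y"
  shows "\<exists>l p. l \<in> B \<and> T l p \<and> (\<forall>q. T l q \<longrightarrow> q = p)"
proof -
  have g: "graph B T" and c: "connected_set T B" and ac: "\<nexists>vs. is_cycle B T vs"
    using t unfolding is_tree_def by auto
  have fin: "finite B" using g unfolding graph_def by auto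
  let ?R = "\<lambda>u v. u \<in> B \<and> v \<in> B \<and> T u v"
  have "?R\<^sup>*\<^sup>* x y" using c xy unfolding connected_set_def by blast
  then obtain z where z: "?R x z"
    by (rule converse_rtranclpE) (use xy(3) in blast)+
  let ?P = "\<lambda>xs. walk T xs \<and> distinct xs \<and> 2 \<le> length xs"
  have inB: "set xs \<subseteq> B" if "walk T xs" "2 \<le> length xs" for xs
  proof
    fix u assume "u \<in> set xs"
    then obtain i where i: "i < length xs" "xs!i = u" by (metis in_set_conv_nth)
    show "u \<in> B"
    proof (cases "Suc i < length xs")
      case True then show ?thesis using that i graph_in[OF g] unfolding walk_def by blast
    next
      case False then have ii: "i = Suc (i - 1)" "Suc (i - 1) < length xs" using that i by auto
      then have "T (xs!(i-1)) (xs!Suc (i-1))" using that(1) unfolding walk_def by blast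
      then have "T (xs!(i-1)) (xs!i)" using ii(1) by simp
      then show ?thesis using i graph_in[OF g] by blast
    qed
  qed
  have "x \<noteq> z" using z graph_irr[OF g] by blast
  moreover have "walk T [x, z]" unfolding walk_def using z by (auto simp: less_Suc_eq)
  ultimately have P0: "?P [x, z]" by simp
  have bnd: "\<forall>xs. ?P xs \<longrightarrow> length xs < Suc (card B)"
  proof (intro allI impI)
    fix xs assume "?P xs"
    then have "card (set xs) \<le> card B" using inB card_mono[OF fin] by blast
    moreover have "card (set xs) = length xs" using `?P xs` distinct_card by blast
    ultimately show "length xs < Suc (card B)" by linarith
  qed
  obtain xs where xs: "?P xs" and mx: "\<And>ys. ?P ys \<Longrightarrow> length ys \<le> length xs"
    using ex_has_greatest_nat[of ?P "[x,z]" length "Suc (card B)"] P0 bnd by blast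
  define n where "n = length xs"
  define l where "l = last xs"
  define p where "p = xs!(n-2)"
  have n2: "2 \<le> n" using xs n_def by auto
  have ln: "l = xs!(n-1)"
  proof -
    have "xs \<noteq> []" using n2 n_def by auto
    then show ?thesis unfolding l_def n_def by (simp add: last_conv_nth)
  qed
  have Tpl: "T p l"
  proof -
    have "Suc (n-2) < length xs" "Suc (n-2) = n-1" using n2 n_def by auto
    then show ?thesis using xs unfolding walk_def p_def ln by metis
  qed
  have "xs \<noteq> []" using xs unfolding walk_def by blast
  then have lB: "l \<in> B" using inB xs unfolding l_def by (meson last_in_set subsetD)
  have uniq: "q = p" if q: "T l q" for q
  proof (rule ccontr)
    assume qp: "q \<noteq> p"
    show False
    proof (cases "q \<in> set xs")
      case False
      have "?P (xs @ [q])"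
      proof (intro conjI)
        show "distinct (xs @ [q])" using xs False by simp
        show "2 \<le> length (xs @ [q])" using n2 n_def by simp
        show "walk T (xs @ [q])" unfolding walk_def
        proof (intro conjI allI impI)
          show "xs @ [q] \<noteq> []" by simp
          fix i assume i: "Suc i < length (xs @ [q])"
          show "T ((xs @ [q]) ! i) ((xs @ [q]) ! Suc i)"
          proof (cases "Suc i < n")
            case True
            then have "(xs @ [q]) ! i = xs!i" "(xs @ [q]) ! Suc i = xs ! Suc i" using n_def by (auto simp: nth_append)
            moreover have "T (xs!i) (xs!Suc i)" using xs True n_def unfolding walk_def by blast
            ultimately show ?thesis by simp
          next
            case False then have ii: "i = n - 1" using i n_def by auto
            then have "(xs @ [q]) ! i = l" "(xs @ [q]) ! Suc i = q" using ln n2 n_def by (auto simp: nth_append)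
            then show ?thesis using q by simp
          qed
        qed
      qed
      then show False using mx[of "xs @ [q]"] by simp
    next
      case True
      then obtain j where j: "j < n" "xs!j = q" unfolding n_def in_set_conv_nth by blast
      have "l \<noteq> q" using q graph_irr[OF g] by metis
      then have "j \<noteq> n - 1" using j(2) ln by metis
      moreover have "j \<noteq> n - 2" using j(2) qp p_def by metis
      ultimately have jn: "j + 3 \<le> n" using j by linarith
      let ?vs = "drop j xs"
      have wx: "walk T xs" and dx: "distinct xs" using xs by auto
      have sxB: "set xs \<subseteq> B" by (rule inB) (use xs in auto)
      have c1: "3 \<le> length ?vs" using jn unfolding n_def by simp
      have c2: "distinct ?vs" using dx by simp
      have c3: "set ?vs \<subseteq> B" using set_drop_subset[of j xs] sxB by (rule order_trans)
      have lv: "last ?vs = l" using j unfolding n_def l_def by simp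
      have hv: "hd ?vs = q" using j unfolding n_def by (simp add: hd_drop_conv_nth)
      have c4: "T u v" if uv: "cadj ?vs u v" for u v
      proof -
        have "padj ?vs u v \<or> (u = last ?vs \<and> v = hd ?vs)" using uv unfolding cadj_def by blast
        then show "T u v"
        proof
          assume "padj ?vs u v" then have "padj xs u v" by (rule padj_drop)
          then show ?thesis using padj_walk[OF wx] by blast
        next
          assume "u = last ?vs \<and> v = hd ?vs"
          then have "u = l" "v = q" using lv hv by auto
          then show ?thesis using q by simp
        qed
      qed
      have "is_cycle B T ?vs" unfolding is_cycle_alt using c1 c2 c3 c4 by blast
      then show False using ac by blast
    qed
  qed
  show ?thesis using lB Tpl uniq graph_sym[OF g] by blast
qed

lemma connected_remove_leaf:
  assumes sym: "\<And>x y. T x y \<Longrightarrow> T y x" and c: "connected_set T S"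
    and leaf: "\<And>q. T l q \<Longrightarrow> q = p" and irr: "\<And>x. \<not> T x x"
  shows "connected_set (\<lambda>x y. T x y \<and> x \<noteq> l \<and> y \<noteq> l) (S - {l})"
proof -
  let ?R = "\<lambda>u v. u \<in> S \<and> v \<in> S \<and> T u v"
  let ?R' = "\<lambda>u v. u \<in> S - {l} \<and> v \<in> S - {l} \<and> (T u v \<and> u \<noteq> l \<and> v \<noteq> l)"
  have key: "(y \<noteq> l \<longrightarrow> ?R'\<^sup>*\<^sup>* x y) \<and> (y = l \<longrightarrow> ?R'\<^sup>*\<^sup>* x p)"
    if r: "?R\<^sup>*\<^sup>* x y" and xl: "x \<noteq> l" for x y
    using r
  proof (induction rule: rtranclp_induct)
    case base then show ?case using xl by simp
  next
    case (step y z)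
    have IH1: "y \<noteq> l \<Longrightarrow> ?R'\<^sup>*\<^sup>* x y" using step.IH by blast
    have IH2: "y = l \<Longrightarrow> ?R'\<^sup>*\<^sup>* x p" using step.IH by blast
    have Ryz: "y \<in> S" "z \<in> S" "T y z" using step.hyps(2) by auto
    show ?case
    proof (intro conjI impI)
      assume zl: "z \<noteq> l"
      show "?R'\<^sup>*\<^sup>* x z"
      proof (cases "y = l")
        case True
        then have "T l z" using Ryz(3) by simp
        then have "z = p" by (rule leaf)
        then show ?thesis using IH2[OF True] by simp
      next
        case False
        then have "?R' y z" using Ryz zl by simp
        then show ?thesis using IH1[OF False] by (rule rtranclp.rtrancl_into_rtrancl[rotated])
      qed
    next
      assume zl: "z = l"
      have yl: "y \<noteq> l" using Ryz(3) zl irr by metis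
      have "T l y" using sym Ryz(3) zl by simp
      then have "y = p" by (rule leaf)
      then show "?R'\<^sup>*\<^sup>* x p" using IH1[OF yl] by simp
    qed
  qed
  show ?thesis unfolding connected_set_def
  proof (intro ballI)
    fix x y assume "x \<in> S - {l}" "y \<in> S - {l}"
    then have "?R\<^sup>*\<^sup>* x y" using c unfolding connected_set_def by simp
    then show "?R'\<^sup>*\<^sup>* x y" using key[of x y] `x \<in> S - {l}` `y \<in> S - {l}` by simp
  qed
qed

lemma leaf_parent_in:
  assumes sym: "\<And>x y. T x y \<Longrightarrow> T y x" and c: "connected_set T S"
    and leaf: "\<And>q. T l q \<Longrightarrow> q = p" and lS: "l \<in> S" and xS: "x \<in> S" "x \<noteq> l"
  shows "p \<in> S"
proof -
  let ?R = "\<lambda>u v. u \<in> S \<and> v \<in> S \<and> T u v"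
  have "?R\<^sup>*\<^sup>* x l" using c lS xS unfolding connected_set_def by blast
  then obtain y where "?R y l"
    by (rule rtranclp.cases) (use xS(2) in blast)+
  then have "T l y" "y \<in> S" using sym by auto
  then show ?thesis using leaf by metis
qed

lemma tree_remove_leaf:
  assumes t: "is_tree B T" and leaf: "\<And>q. T l q \<Longrightarrow> q = p"
  shows "is_tree (B - {l}) (\<lambda>x y. T x y \<and> x \<noteq> l \<and> y \<noteq> l)"
proof -
  have g: "graph B T" and c: "connected_set T B" and ac: "\<nexists>vs. is_cycle B T vs"
    using t unfolding is_tree_def by auto
  have g': "graph (B - {l}) (\<lambda>x y. T x y \<and> x \<noteq> l \<and> y \<noteq> l)" using g unfolding graph_def by auto
  have c': "connected_set (\<lambda>x y. T x y \<and> x \<noteq> l \<and> y \<noteq> l) (B - {l})"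
    using connected_remove_leaf[OF graph_sym[OF g] c leaf graph_irr[OF g]] by blast
  have "\<nexists>vs. is_cycle (B - {l}) (\<lambda>x y. T x y \<and> x \<noteq> l \<and> y \<noteq> l) vs"
  proof
    assume "\<exists>vs. is_cycle (B - {l}) (\<lambda>x y. T x y \<and> x \<noteq> l \<and> y \<noteq> l) vs"
    then obtain vs where "is_cycle (B - {l}) (\<lambda>x y. T x y \<and> x \<noteq> l \<and> y \<noteq> l) vs" by blast
    then have "is_cycle B T vs" unfolding is_cycle_def by auto
    then show False using ac by blast
  qed
  then show ?thesis using g' c' unfolding is_tree_def by blast
qed

definition addleaf :: "('v \<Rightarrow> 'v \<Rightarrow> bool) \<Rightarrow> 'v \<Rightarrow> 'v \<Rightarrow> 'v \<Rightarrow> 'v \<Rightarrow> bool" where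
  "addleaf T b b' x y \<longleftrightarrow> T x y \<or> (x = b \<and> y = b') \<or> (x = b' \<and> y = b)"

lemma connected_mono_rel:
  assumes "connected_set T S" "\<And>x y. x \<in> S \<Longrightarrow> y \<in> S \<Longrightarrow> T x y \<Longrightarrow> T' x y"
  shows "connected_set T' S"
proof -
  have "(\<lambda>u v. u \<in> S \<and> v \<in> S \<and> T' u v)\<^sup>*\<^sup>* x y"
    if "(\<lambda>u v. u \<in> S \<and> v \<in> S \<and> T u v)\<^sup>*\<^sup>* x y" for x y
    using that
  proof (induction rule: rtranclp_induct)
    case base then show ?case by simp
  next
    case (step y z) then show ?case using assms(2) by (simp add: rtranclp.rtrancl_into_rtrancl)
  qed
  then show ?thesis using assms(1) unfolding connected_set_def by blast
qed

lemma tree_add_leaf: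
  assumes t: "is_tree B T" and b: "b \<notin> B" and b': "b' \<in> B"
  shows "is_tree (insert b B) (addleaf T b b')"
proof -
  have g: "graph B T" and c: "connected_set T B" and ac: "\<nexists>vs. is_cycle B T vs"
    using t unfolding is_tree_def by auto
  have bb: "b \<noteq> b'" using b b' by auto
  have nTb: "\<not> T b y" "\<not> T y b" for y using graph_in[OF g] b by metis+
  have symA: "addleaf T b b' y x" if "addleaf T b b' x y" for x y
    using that graph_sym[OF g] unfolding addleaf_def by blast
  have g': "graph (insert b B) (addleaf T b b')" unfolding graph_def
  proof (intro conjI allI impI)
    show "finite (insert b B)" using g unfolding graph_def by simp
    fix x y assume "addleaf T b b' x y"
    then show "x \<in> insert b B" "y \<in> insert b B" using graph_in[OF g] b' unfolding addleaf_def by auto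
  next
    fix x y assume "addleaf T b b' x y" then show "addleaf T b b' y x" by (rule symA)
  next
    fix x show "\<not> addleaf T b b' x x" using graph_irr[OF g] bb unfolding addleaf_def by simp
  qed
  let ?S = "insert b B"
  let ?R = "\<lambda>u v. u \<in> ?S \<and> v \<in> ?S \<and> addleaf T b b' u v"
  have cB: "connected_set (addleaf T b b') B"
    by (rule connected_mono_rel[OF c]) (simp add: addleaf_def)
  have r: "?R\<^sup>*\<^sup>* b' x" if x: "x \<in> ?S" for x
  proof (cases "x = b")
    case True
    have "?R b' b" using b' unfolding addleaf_def by simp
    then show ?thesis using True by (simp add: r_into_rtranclp)
  next
    case False
    then have "x \<in> B" using x by auto
    then have "(\<lambda>u v. u \<in> B \<and> v \<in> B \<and> addleaf T b b' u v)\<^sup>*\<^sup>* b' x" using cB b' unfolding connected_set_def by blast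
    then show ?thesis
    proof (induction rule: rtranclp_induct)
      case base then show ?case by simp
    next
      case (step y z) then show ?case by (simp add: rtranclp.rtrancl_into_rtrancl)
    qed
  qed
  have c': "connected_set (addleaf T b b') ?S"
    by (rule connected_via_root[OF symA r])
  have "\<nexists>vs. is_cycle ?S (addleaf T b b') vs"
  proof
    assume "\<exists>vs. is_cycle ?S (addleaf T b b') vs"
    then obtain vs where cy: "is_cycle ?S (addleaf T b b') vs" by blast
    then have d: "distinct vs" and l3: "3 \<le> length vs" and sub: "set vs \<subseteq> ?S"
      and e: "\<And>x y. cadj vs x y \<Longrightarrow> addleaf T b b' x y" unfolding is_cycle_alt by auto
    show False
    proof (cases "b \<in> set vs")
      case True
      obtain y where y: "cadj vs b y" using cadj_ex1[OF True] by blast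
      obtain z where z: "cadj vs z b" using cadj_ex2[OF True] by blast
      have "addleaf T b b' b y" using e[OF y] .
      then have yb: "y = b'" using nTb bb unfolding addleaf_def by simp
      have "addleaf T b b' z b" using e[OF z] .
      then have zb: "z = b'" using nTb bb unfolding addleaf_def by auto
      have "\<not> cadj vs y b" using cadj_not_sym[OF d l3 y] .
      then show False using z yb zb by simp
    next
      case False
      have c4: "T x y" if xy: "cadj vs x y" for x y
      proof -
        have "x \<noteq> b" "y \<noteq> b" using cadj_set[OF xy] False by auto
        then show "T x y" using e[OF xy] unfolding addleaf_def by simp
      qed
      have "set vs \<subseteq> B" using sub False by auto
      then have "is_cycle B T vs" unfolding is_cycle_alt using d l3 c4 by blast
      then show False using ac by blast
    qed
  qed
  then show ?thesis using g' c' unfolding is_tree_def by blast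
qed



definition inst :: "'v set \<Rightarrow> ('v \<Rightarrow> 'v \<Rightarrow> bool) \<Rightarrow> 'v set \<Rightarrow> 'v set \<Rightarrow> 'v set \<Rightarrow> 'v set \<Rightarrow> bool" where
  "inst V E A B A1 A2 \<longleftrightarrow> bipartite_with V E A B \<and> A = A1 \<union> A2 \<and> A1 \<inter> A2 = {} \<and> laminar E A1 \<and> laminar E A2"

definition holefree :: "'v set \<Rightarrow> ('v \<Rightarrow> 'v \<Rightarrow> bool) \<Rightarrow> bool" where
  "holefree V E \<longleftrightarrow> (\<forall>vs. is_hole V E vs \<longrightarrow> length vs = 4)"

definition restr :: "('v \<Rightarrow> 'v \<Rightarrow> bool) \<Rightarrow> 'v set \<Rightarrow> 'v \<Rightarrow> 'v \<Rightarrow> bool" where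
  "restr E V' x y \<longleftrightarrow> E x y \<and> x \<in> V' \<and> y \<in> V'"

lemma inst_sym: "inst V E A B A1 A2 \<Longrightarrow> inst V E A B A2 A1"
  unfolding inst_def by auto

lemma inst_graph: "inst V E A B A1 A2 \<Longrightarrow> graph V E"
  unfolding inst_def bipartite_with_def by blast

lemma inst_edge: "inst V E A B A1 A2 \<Longrightarrow> E x y \<Longrightarrow> (x \<in> A \<and> y \<in> B) \<or> (x \<in> B \<and> y \<in> A)"
  unfolding inst_def bipartite_with_def by blast

lemma inst_V: "inst V E A B A1 A2 \<Longrightarrow> V = A \<union> B \<and> A \<inter> B = {} \<and> finite V"
  unfolding inst_def bipartite_with_def graph_def by blast

lemma inst_A: "inst V E A B A1 A2 \<Longrightarrow> A = A1 \<union> A2 \<and> A1 \<inter> A2 = {}"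
  unfolding inst_def by blast

lemma inst_lam: "inst V E A B A1 A2 \<Longrightarrow> laminar E A1 \<and> laminar E A2"
  unfolding inst_def by blast

lemma nbhd_sub: "inst V E A B A1 A2 \<Longrightarrow> a \<in> A \<Longrightarrow> nbhd E a \<subseteq> B"
proof
  fix y assume i: "inst V E A B A1 A2" and a: "a \<in> A" and y: "y \<in> nbhd E a"
  then have "E a y" unfolding nbhd_def by simp
  then have "(a \<in> A \<and> y \<in> B) \<or> (a \<in> B \<and> y \<in> A)" using inst_edge[OF i] by blast
  then show "y \<in> B" using a inst_V[OF i] by blast
qed

lemma laminar_sub: "laminar E A' \<Longrightarrow> a \<in> A' \<Longrightarrow> a' \<in> A' \<Longrightarrow> a \<noteq> a' \<Longrightarrow>
     nbhd E a \<subseteq> nbhd E a' \<or> nbhd E a' \<subseteq> nbhd E a \<or> nbhd E a \<inter> nbhd E a' = {}"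
  unfolding laminar_def by blast

lemma nbhd_restr: "inst V E A B A1 A2 \<Longrightarrow> a \<in> A \<Longrightarrow> nbhd (restr E (A \<union> B')) a = nbhd E a \<inter> B'"
proof -
  assume i: "inst V E A B A1 A2" and a: "a \<in> A"
  have "nbhd E a \<subseteq> B" using nbhd_sub[OF i a] .
  moreover have "A \<inter> B = {}" using inst_V[OF i] by blast
  ultimately show ?thesis using a unfolding nbhd_def restr_def by blast
qed

lemma laminar_restr:
  assumes i: "inst V E A B A1 A2" and l: "laminar E A'" and A': "A' \<subseteq> A"
  shows "laminar (restr E (A \<union> B')) A'"
  unfolding laminar_def
proof (intro ballI impI)
  fix a a' assume aa: "a \<in> A'" "a' \<in> A'" "a \<noteq> a'"
  have e1: "nbhd (restr E (A \<union> B')) a = nbhd E a \<inter> B'" using nbhd_restr[OF i] aa A' by blast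
  have e2: "nbhd (restr E (A \<union> B')) a' = nbhd E a' \<inter> B'" using nbhd_restr[OF i] aa A' by blast
  have "nbhd E a \<subseteq> nbhd E a' \<or> nbhd E a' \<subseteq> nbhd E a \<or> nbhd E a \<inter> nbhd E a' = {}"
    using laminar_sub[OF l aa] .
  then show "nbhd (restr E (A \<union> B')) a \<subseteq> nbhd (restr E (A \<union> B')) a' \<or>
           nbhd (restr E (A \<union> B')) a' \<subseteq> nbhd (restr E (A \<union> B')) a \<or>
           nbhd (restr E (A \<union> B')) a \<inter> nbhd (restr E (A \<union> B')) a' = {}"
    unfolding e1 e2 by blast
qed

lemma inst_restr:
  assumes i: "inst V E A B A1 A2" and B': "B' \<subseteq> B"
  shows "inst (A \<union> B') (restr E (A \<union> B')) A B' A1 A2"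
proof -
  have g: "graph V E" using inst_graph[OF i] .
  have V: "V = A \<union> B" "A \<inter> B = {}" "finite V" using inst_V[OF i] by auto
  have AA: "A = A1 \<union> A2" "A1 \<inter> A2 = {}" using inst_A[OF i] by auto
  have gr: "graph (A \<union> B') (restr E (A \<union> B'))" unfolding graph_def
  proof (intro conjI allI impI)
    show "finite (A \<union> B')" using V B' by (meson finite_Un finite_subset le_sup_iff subset_refl)
    fix x y assume "restr E (A \<union> B') x y"
    then show "x \<in> A \<union> B'" "y \<in> A \<union> B'" unfolding restr_def by auto
  next
    fix x y assume "restr E (A \<union> B') x y"
    then show "restr E (A \<union> B') y x" using graph_sym[OF g] unfolding restr_def by blast
  next
    fix x show "\<not> restr E (A \<union> B') x x" using graph_irr[OF g] unfolding restr_def by blast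
  qed
  have bp: "bipartite_with (A \<union> B') (restr E (A \<union> B')) A B'" unfolding bipartite_with_def
  proof (intro conjI allI impI gr)
    show "A \<union> B' = A \<union> B'" by simp
    show "A \<inter> B' = {}" using V B' by blast
    fix x y assume r: "restr E (A \<union> B') x y"
    then have "E x y" "x \<in> A \<union> B'" "y \<in> A \<union> B'" unfolding restr_def by auto
    then show "x \<in> A \<and> y \<in> B' \<or> x \<in> B' \<and> y \<in> A" using inst_edge[OF i] V B' by blast
  qed
  have l1: "laminar (restr E (A \<union> B')) A1" using laminar_restr[OF i] inst_lam[OF i] AA by blast
  have l2: "laminar (restr E (A \<union> B')) A2" using laminar_restr[OF i] inst_lam[OF i] AA by blast
  show ?thesis unfolding inst_def using bp AA l1 l2 by blast
qed

lemma hole_restr: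
  assumes g: "graph V E" and V': "V' \<subseteq> V" and h: "is_hole V' (restr E V') vs"
  shows "is_hole V E vs"
proof -
  have ic: "is_induced_cycle V' (restr E V') vs" and l: "4 \<le> length vs" using h unfolding is_hole_def by auto
  have s: "set vs \<subseteq> V'" using ic unfolding is_induced_cycle_def is_cycle_def by blast
  have "is_induced_cycle V E (map id vs)"
  proof (rule induced_cycle_map[OF ic])
    show "inj_on id (set vs)" by simp
    show "id ` set vs \<subseteq> V" using s V' by auto
    fix x y assume "x \<in> set vs" "y \<in> set vs"
    then show "E (id x) (id y) = restr E V' x y" using s unfolding restr_def by auto
  qed
  then show ?thesis using l unfolding is_hole_def by simp
qed

lemma holefree_restr: "graph V E \<Longrightarrow> V' \<subseteq> V \<Longrightarrow> holefree V E \<Longrightarrow> holefree V' (restr E V')"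
  unfolding holefree_def using hole_restr by blast

lemma hn_sub: "hn E vs x \<subseteq> set vs" unfolding hn_def by auto

lemma hn_eq2: "hn E vs x = {y, z} \<Longrightarrow> a \<in> hn E vs x \<Longrightarrow> c \<in> hn E vs x \<Longrightarrow> a \<noteq> c \<Longrightarrow> hn E vs x = {a, c}"
  by auto

lemma no_short:
  assumes ic: "is_induced_cycle V E vs" and sym: "\<And>x y. E x y \<Longrightarrow> E y x" and l5: "5 \<le> length vs"
    and l: "l \<in> set vs" and hl: "hn E vs l = {u, w}" and uw: "u \<noteq> w"
    and hu: "hn E vs u = {l, u'}" and lu: "l \<noteq> u'"
  shows "\<not> E w u'"
proof
  assume ewu: "E w u'"
  have d: "distinct vs" and cyE: "\<And>x y. cadj vs x y \<Longrightarrow> E x y"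
    using ic unfolding is_induced_cycle_alt is_cycle_alt by auto
  have uin: "u \<in> set vs" "w \<in> set vs" using hl hn_sub by (metis insertI1 insert_subset) (metis hl hn_sub insert_subset subset_insertI)
  have u'in: "u' \<in> set vs" using hu hn_sub by (metis insert_subset subset_insertI)
  have Elw: "E l w" using hl unfolding hn_def by blast
  have Eul: "E u l" using hu unfolding hn_def by blast
  have Euu': "E u u'" using hu unfolding hn_def by blast
  obtain y1 y2 where hw: "y1 \<noteq> y2" "hn E vs w = {y1, y2}" using hn_two[OF ic sym uin(2)] by blast
  have "l \<in> hn E vs w" using sym[OF Elw] l unfolding hn_def by blast
  moreover have "u' \<in> hn E vs w" using ewu u'in unfolding hn_def by blast
  ultimately have hw2: "hn E vs w = {l, u'}" using hn_eq2[OF hw(2)] lu by blast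
  obtain z1 z2 where hu': "z1 \<noteq> z2" "hn E vs u' = {z1, z2}" using hn_two[OF ic sym u'in] by blast
  have "u \<in> hn E vs u'" using sym[OF Euu'] uin unfolding hn_def by blast
  moreover have "w \<in> hn E vs u'" using sym[OF ewu] uin unfolding hn_def by blast
  ultimately have hu'2: "hn E vs u' = {u, w}" using hn_eq2[OF hu'(2)] uw by blast
  let ?S = "{l, u, u', w}"
  have "set vs \<subseteq> ?S"
  proof (rule closed_all)
    show "?S \<noteq> {}" by simp
    show "?S \<subseteq> set vs" using l uin u'in by blast
    fix x y assume x: "x \<in> ?S" and c: "cadj vs x y"
    have "y \<in> hn E vs x" using cyE[OF c] cadj_set[OF c] unfolding hn_def by blast
    then show "y \<in> ?S" using x hl hu hw2 hu'2 by blast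
  qed
  then have "card (set vs) \<le> card ?S" by (simp add: card_mono)
  moreover have "card ?S \<le> 4" by (simp add: card_insert_le_m1)
  moreover have "card (set vs) = length vs" using d by (simp add: distinct_card)
  ultimately show False using l5 by linarith
qed



definition subprop :: "'v set \<Rightarrow> ('v \<Rightarrow> 'v \<Rightarrow> bool) \<Rightarrow> ('v \<Rightarrow> 'v \<Rightarrow> bool) \<Rightarrow> 'v set \<Rightarrow> bool" where
  "subprop B T E A \<longleftrightarrow> (\<forall>a\<in>A. subtree_vertex_set B T (nbhd E a))"

lemma BA_step:
  assumes i: "inst V E A B A1 A2" and t: "is_tree B T" and sp: "subprop B T E A"
    and IH: "\<And>V' E' B' T'. B' \<subset> B \<Longrightarrow> inst V' E' A B' A1 A2 \<Longrightarrow> is_tree B' T' \<Longrightarrow> subprop B' T' E' A \<Longrightarrow> holefree V' E'"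
  shows "holefree V E"
  unfolding holefree_def
proof (intro allI impI, rule ccontr)
  fix vs assume h: "is_hole V E vs" and n4: "length vs \<noteq> 4"
  have g: "graph V E" using inst_graph[OF i] .
  have sym: "\<And>x y. E x y \<Longrightarrow> E y x" using graph_sym[OF g] .
  have VAB: "V = A \<union> B" "A \<inter> B = {}" "finite V" using inst_V[OF i] by auto
  have ic: "is_induced_cycle V E vs" and l5: "5 \<le> length vs" using h n4 unfolding is_hole_def by auto
  have d: "distinct vs" and sv: "set vs \<subseteq> V" using ic unfolding is_induced_cycle_alt is_cycle_alt by auto
  have gT: "graph B T" using t unfolding is_tree_def by blast
  have symT: "\<And>x y. T x y \<Longrightarrow> T y x" using graph_sym[OF gT] .
  have edge: "\<And>x y. E x y \<Longrightarrow> (x \<in> A \<and> y \<in> B) \<or> (x \<in> B \<and> y \<in> A)" using inst_edge[OF i] .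
  obtain b1 b2 where b12: "b1 \<in> B" "b2 \<in> B" "b1 \<noteq> b2"
  proof -
    have "vs \<noteq> []" using l5 by auto
    then obtain x where x: "x \<in> set vs" by (meson last_in_set)
    obtain y z where yz: "y \<noteq> z" "hn E vs x = {y, z}" using hn_two[OF ic sym x] by blast
    have Exy: "E x y" "E x z" using yz unfolding hn_def by auto
    have yin: "y \<in> set vs" using yz hn_sub by (metis insertI1 subsetD)
    show ?thesis
    proof (cases "x \<in> B")
      case True
      then have yA: "y \<in> A" using edge[OF Exy(1)] VAB by blast
      obtain y1 y2 where yy: "y1 \<noteq> y2" "hn E vs y = {y1, y2}" using hn_two[OF ic sym yin] by blast
      have "E y y1" "E y y2" using yy unfolding hn_def by auto
      then have "y1 \<in> B" "y2 \<in> B" using edge yA VAB by blast+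
      then show ?thesis using that yy by blast
    next
      case False
      then have "x \<in> A" using x sv VAB by blast
      then have "y \<in> B" "z \<in> B" using edge Exy VAB by blast+
      then show ?thesis using that yz by blast
    qed
  qed
  obtain l p where lp: "l \<in> B" "T l p" and leaf: "\<And>q. T l q \<Longrightarrow> q = p" using tree_leaf[OF t b12] by blast
  have pB: "p \<in> B" "p \<noteq> l" using graph_in[OF gT lp(2)] graph_irr[OF gT] lp(2) by auto
  let ?B' = "B - {l}"
  let ?V' = "A \<union> ?B'"
  let ?E' = "restr E ?V'"
  let ?T' = "\<lambda>x y. T x y \<and> x \<noteq> l \<and> y \<noteq> l"
  have i': "inst ?V' ?E' A ?B' A1 A2" using inst_restr[OF i] by blast
  have t': "is_tree ?B' ?T'" using tree_remove_leaf[OF t leaf] .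
  have sp': "subprop ?B' ?T' ?E' A" unfolding subprop_def
  proof
    fix a assume a: "a \<in> A"
    have st: "subtree_vertex_set B T (nbhd E a)" using sp a unfolding subprop_def by blast
    have e: "nbhd ?E' a = nbhd E a - {l}" using nbhd_restr[OF i a, of ?B'] nbhd_sub[OF i a] by blast
    have "connected_set T (nbhd E a)" using st unfolding subtree_vertex_set_def by blast
    then have "connected_set ?T' (nbhd E a - {l})"
      using connected_remove_leaf[of T "nbhd E a" l p] symT leaf graph_irr[OF gT] by blast
    then show "subtree_vertex_set ?B' ?T' (nbhd ?E' a)" unfolding e subtree_vertex_set_def
      using st unfolding subtree_vertex_set_def by blast
  qed
  have hf: "holefree ?V' ?E'" using IH[OF _ i' t' sp'] lp(1) by blast
  show False
  proof (cases "l \<in> set vs")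
    case False
    have "is_induced_cycle ?V' ?E' (map id vs)"
    proof (rule induced_cycle_map[OF ic])
      show "inj_on id (set vs)" by simp
      show "id ` set vs \<subseteq> ?V'" using sv False VAB by auto
      fix x y assume "x \<in> set vs" "y \<in> set vs"
      then show "?E' (id x) (id y) = E x y" using sv False VAB unfolding restr_def by auto
    qed
    then have "is_hole ?V' ?E' vs" using l5 unfolding is_hole_def by simp
    then show False using hf n4 unfolding holefree_def by blast
  next
    case True
    note lin = True
    obtain u w where uw: "u \<noteq> w" "hn E vs l = {u, w}" using hn_two[OF ic sym True] by blast
    have Elu: "E l u" "E l w" using uw unfolding hn_def by auto
    have uin: "u \<in> set vs" "w \<in> set vs" using uw(2) hn_sub by (metis insertI1 insert_subset)+
    have uA: "u \<in> A" "w \<in> A" using edge Elu lp(1) VAB by blast+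
    have "l \<in> hn E vs u" using sym[OF Elu(1)] True unfolding hn_def by blast
    then obtain u' where hu: "hn E vs u = {l, u'}" "l \<noteq> u'"
    proof -
      obtain y z where yz: "y \<noteq> z" "hn E vs u = {y, z}" using hn_two[OF ic sym uin(1)] by blast
      show ?thesis
      proof (cases "y = l")
        case True then show ?thesis using that yz by blast
      next
        case False then have "z = l" using yz `l \<in> hn E vs u` by auto
        then show ?thesis using that yz by blast
      qed
    qed
    have "l \<in> hn E vs w" using sym[OF Elu(2)] True unfolding hn_def by blast
    then obtain w' where hw: "hn E vs w = {l, w'}" "l \<noteq> w'"
    proof -
      obtain y z where yz: "y \<noteq> z" "hn E vs w = {y, z}" using hn_two[OF ic sym uin(2)] by blast
      show ?thesis
      proof (cases "y = l")
        case True then show ?thesis using that yz by blast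
      next
        case False then have "z = l" using yz `l \<in> hn E vs w` by auto
        then show ?thesis using that yz by blast
      qed
    qed
    have nwu': "\<not> E w u'" using no_short[OF ic sym l5 True uw(2) uw(1) hu] .
    have nuw': "\<not> E u w'" using no_short[OF ic sym l5 True _ _ hw] uw by (metis insert_commute)
    have Euu': "E u u'" "E w w'" using hu hw unfolding hn_def by auto
    have pN: "p \<in> nbhd E v" if v: "v \<in> {u, w}" "hn E vs v = {l, v'}" "l \<noteq> v'" for v v'
    proof -
      have vA: "v \<in> A" using v uA by blast
      have st: "connected_set T (nbhd E v)" using sp vA unfolding subprop_def subtree_vertex_set_def by blast
      have "E v l" "E v v'" using v unfolding hn_def by auto
      then have "l \<in> nbhd E v" "v' \<in> nbhd E v" unfolding nbhd_def by auto
      then show ?thesis using leaf_parent_in[OF symT st leaf] v(3) by metis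
    qed
    have pu: "p \<in> nbhd E u" using pN[of u u'] hu by blast
    have pw: "p \<in> nbhd E w" using pN[of w w'] hw by blast
    have diff: "\<not> (u \<in> A' \<and> w \<in> A')" if lam: "laminar E A'" for A'
    proof
      assume uw': "u \<in> A' \<and> w \<in> A'"
      have "nbhd E u \<subseteq> nbhd E w \<or> nbhd E w \<subseteq> nbhd E u \<or> nbhd E u \<inter> nbhd E w = {}"
        using laminar_sub[OF lam] uw' uw(1) by blast
      moreover have "l \<in> nbhd E u" "l \<in> nbhd E w" using sym Elu unfolding nbhd_def by auto
      moreover have "u' \<in> nbhd E u" "w' \<in> nbhd E w" using Euu' unfolding nbhd_def by auto
      ultimately show False using nwu' nuw' unfolding nbhd_def by blast
    qed
    have lams: "laminar E A1" "laminar E A2" using inst_lam[OF i] by auto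
    have AA: "A = A1 \<union> A2" "A1 \<inter> A2 = {}" using inst_A[OF i] by auto
    have pnot: "p \<notin> set vs"
    proof
      assume "p \<in> set vs"
      then have "p \<in> hn E vs u" using pu unfolding hn_def nbhd_def by blast
      then have "p = u'" using hu pB(2) by blast
      then show False using pw nwu' unfolding nbhd_def by blast
    qed
    have same: "E p x \<longleftrightarrow> E l x" if x: "x \<in> set vs" for x
    proof (cases "x = u \<or> x = w")
      case True
      then show ?thesis using pu pw Elu unfolding nbhd_def using sym by blast
    next
      case False
      then have nlx: "\<not> E l x" using uw(2) x unfolding hn_def by blast
      have "\<not> E p x"
      proof
        assume Epx: "E p x"
        have xA: "x \<in> A" using edge[OF Epx] pB VAB by blast
        have fam: "\<exists>v v' A'. v \<in> {u, w} \<and> hn E vs v = {l, v'} \<and> laminar E A' \<and> x \<in> A' \<and> v \<in> A'"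
        proof -
          have "u \<in> A1 \<or> u \<in> A2" "w \<in> A1 \<or> w \<in> A2" "x \<in> A1 \<or> x \<in> A2" using uA xA AA by blast+
          then show ?thesis using diff[OF lams(1)] diff[OF lams(2)] lams hu hw by blast
        qed
        then obtain v v' A' where v: "v \<in> {u, w}" "hn E vs v = {l, v'}" "laminar E A'" "x \<in> A'" "v \<in> A'" by blast
        have xv: "x \<noteq> v" using False v(1) by blast
        have pv: "p \<in> nbhd E v" using v(1) pu pw by blast
        have px: "p \<in> nbhd E x" using sym[OF Epx] unfolding nbhd_def by blast
        have lv: "l \<in> nbhd E v" using v(1) sym Elu unfolding nbhd_def by blast
        have lx: "l \<notin> nbhd E x" using nlx sym unfolding nbhd_def by blast
        have "nbhd E x \<subseteq> nbhd E v \<or> nbhd E v \<subseteq> nbhd E x \<or> nbhd E x \<inter> nbhd E v = {}"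
          using laminar_sub[OF v(3) v(4) v(5) xv] .
        then have sub: "nbhd E x \<subseteq> nbhd E v" using pv px lv lx by blast
        have "hn E vs x \<subseteq> hn E vs v" using sub unfolding hn_def nbhd_def by blast
        then have hx: "hn E vs x \<subseteq> {l, v'}" using v(2) by simp
        obtain y z where yz: "y \<noteq> z" "hn E vs x = {y, z}" using hn_two[OF ic sym x] by blast
        then have "l \<in> hn E vs x" using hx by blast
        then have "E x l" unfolding hn_def by blast
        then show False using nlx sym by blast
      qed
      then show ?thesis using nlx by blast
    qed
    define g where "g = (\<lambda>y. if y = l then p else y)"
    have ic': "is_induced_cycle ?V' ?E' (map g vs)"
    proof (rule induced_cycle_map[OF ic])
      show "inj_on g (set vs)" unfolding g_def inj_on_def using pnot by auto
      show "g ` set vs \<subseteq> ?V'" unfolding g_def using sv VAB pB by auto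
      fix x y assume xy: "x \<in> set vs" "y \<in> set vs"
      have gin: "g x \<in> ?V'" "g y \<in> ?V'" unfolding g_def using xy sv VAB pB by auto
      have "E (g x) (g y) \<longleftrightarrow> E x y"
      proof (cases "x = l")
        case True
        show ?thesis
        proof (cases "y = l")
          case True then show ?thesis using `x = l` g_def graph_irr[OF g] by simp
        next
          case False then show ?thesis using `x = l` g_def same[OF xy(2)] by simp
        qed
      next
        case False
        show ?thesis
        proof (cases "y = l")
          case True then show ?thesis using `x \<noteq> l` g_def same[OF xy(1)] sym by auto
        next
          case False then show ?thesis using `x \<noteq> l` g_def by simp
        qed
      qed
      then show "?E' (g x) (g y) = E x y" using gin unfolding restr_def by blast
    qed
    then have "is_hole ?V' ?E' (map g vs)" using l5 unfolding is_hole_def by simp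
    then have "length (map g vs) = 4" using hf unfolding holefree_def by blast
    then show False using n4 by simp
  qed
qed

lemma BA:
  assumes "finite B" "inst V E A B A1 A2" "is_tree B T" "subprop B T E A"
  shows "holefree V E"
  using assms
proof (induction B arbitrary: V E T rule: finite_psubset_induct)
  case (psubset B)
  show ?case
  proof (rule BA_step[OF psubset.prems(1-3)])
    fix V' E' B' T' assume "B' \<subset> B" "inst V' E' A B' A1 A2" "is_tree B' T'" "subprop B' T' E' A"
    then show "holefree V' E'" using psubset.IH by blast
  qed
qed



lemma padj_Nil[simp]: "\<not> padj [] u v" unfolding padj_def by simp
lemma padj_single[simp]: "\<not> padj [x] u v" unfolding padj_def by simp
lemma padj_Cons2[simp]: "padj (x # y # xs) u v \<longleftrightarrow> (u = x \<and> v = y) \<or> padj (y # xs) u v"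
proof
  assume "padj (x # y # xs) u v"
  then obtain i where i: "Suc i < length (x # y # xs)" "(x # y # xs)!i = u" "(x # y # xs)!Suc i = v"
    unfolding padj_def by blast
  show "(u = x \<and> v = y) \<or> padj (y # xs) u v"
  proof (cases i)
    case 0 then show ?thesis using i by simp
  next
    case (Suc k)
    then have "Suc k < length (y # xs)" "(y # xs)!k = u" "(y # xs)!Suc k = v" using i by auto
    then show ?thesis unfolding padj_def by blast
  qed
next
  assume "(u = x \<and> v = y) \<or> padj (y # xs) u v"
  then show "padj (x # y # xs) u v"
  proof
    assume "u = x \<and> v = y"
    then show ?thesis unfolding padj_def by (intro exI[of _ 0]) simp
  next
    assume "padj (y # xs) u v"
    then obtain k where k: "Suc k < length (y # xs)" "(y # xs)!k = u" "(y # xs)!Suc k = v"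
      unfolding padj_def by blast
    then show ?thesis unfolding padj_def by (intro exI[of _ "Suc k"]) simp
  qed
qed

lemma chain_min:
  assumes "finite I" "I \<noteq> {}" "\<And>i j. i \<in> I \<Longrightarrow> j \<in> I \<Longrightarrow> f i \<subseteq> f j \<or> f j \<subseteq> f i"
  shows "\<exists>m\<in>I. \<forall>i\<in>I. f m \<subseteq> f i"
  using assms
proof (induction I rule: finite_ne_induct)
  case (singleton x) then show ?case by simp
next
  case (insert x F)
  then obtain m where m: "m \<in> F" "\<forall>i\<in>F. f m \<subseteq> f i" by blast
  have "f x \<subseteq> f m \<or> f m \<subseteq> f x" using insert.prems m(1) by blast
  then show ?case
  proof
    assume "f x \<subseteq> f m" then show ?thesis using m by blast
  next
    assume "f m \<subseteq> f x" then show ?thesis using m by blast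
  qed
qed

definition good :: "('v \<Rightarrow> 'v \<Rightarrow> bool) \<Rightarrow> 'v set \<Rightarrow> 'v \<Rightarrow> 'v \<Rightarrow> bool" where
  "good E A b b' \<longleftrightarrow> b \<noteq> b' \<and> (\<forall>a\<in>A. b \<in> nbhd E a \<longrightarrow> nbhd E a \<subseteq> {b} \<or> b' \<in> nbhd E a)"

locale mlsetup =
  fixes V :: "'v set" and E A B A1 A2 Z c
  assumes i: "inst V E A B A1 A2" and hf: "holefree V E" and Zne: "Z \<noteq> {}" and ZB: "Z \<subseteq> B"
    and c: "c \<in> B" "c \<notin> Z"
    and Zform: "(\<exists>p. Z = {p}) \<or> (\<exists>z0\<in>A. Z = nbhd E z0)"
begin

definition V0 where "V0 = (B - Z) \<union> {a \<in> A. nbhd E a \<inter> Z = {}}"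
definition R where "R = restr E V0"
definition K where "K = {b \<in> B. R\<^sup>*\<^sup>* c b}"
definition crossing where "crossing a \<longleftrightarrow> a \<in> A \<and> nbhd E a \<inter> Z \<noteq> {} \<and> nbhd E a \<inter> K \<noteq> {}"

lemma g: "graph V E" using inst_graph[OF i] .
lemma sym: "E x y \<Longrightarrow> E y x" using graph_sym[OF g] .
lemma irr: "\<not> E x x" using graph_irr[OF g] .
lemma VAB: "V = A \<union> B" "A \<inter> B = {}" "finite V" using inst_V[OF i] by auto
lemma edge: "E x y \<Longrightarrow> (x \<in> A \<and> y \<in> B) \<or> (x \<in> B \<and> y \<in> A)" using inst_edge[OF i] .

lemma Rsym: "R x y \<Longrightarrow> R y x" unfolding R_def restr_def using sym by blast
lemma Rirr: "\<not> R x x" unfolding R_def restr_def using irr by blast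
lemma RE: "R x y \<Longrightarrow> E x y \<and> x \<in> V0 \<and> y \<in> V0" unfolding R_def restr_def by blast

lemma reach_V0: "R\<^sup>*\<^sup>* c x \<Longrightarrow> x = c \<or> x \<in> V0"
  by (induction rule: rtranclp_induct) (auto dest: RE)

lemma K_sub: "K \<subseteq> B - Z"
proof
  fix x assume "x \<in> K"
  then have "x \<in> B" "R\<^sup>*\<^sup>* c x" unfolding K_def by auto
  then show "x \<in> B - Z" using reach_V0 c VAB unfolding V0_def by blast
qed

lemma cK: "c \<in> K" unfolding K_def using c by simp

lemma KZ: "K \<inter> Z = {}" using K_sub by blast

lemma closure:
  assumes b: "b \<in> K" and a: "a \<in> A" and ba: "b \<in> nbhd E a" and aZ: "nbhd E a \<inter> Z = {}"
  shows "nbhd E a \<subseteq> K"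
proof
  fix y assume y: "y \<in> nbhd E a"
  have aV: "a \<in> V0" using a aZ unfolding V0_def by blast
  have bV: "b \<in> V0" using b K_sub unfolding V0_def by blast
  have yB: "y \<in> B" using nbhd_sub[OF i a] y by blast
  have yV: "y \<in> V0" using yB y aZ unfolding V0_def by blast
  have "R b a" using ba aV bV sym unfolding R_def restr_def nbhd_def by blast
  moreover have "R a y" using y aV yV unfolding R_def restr_def nbhd_def by blast
  moreover have "R\<^sup>*\<^sup>* c b" using b unfolding K_def by blast
  ultimately have "R\<^sup>*\<^sup>* c y" by (meson rtranclp.rtrancl_into_rtrancl)
  then show "y \<in> K" using yB unfolding K_def by blast
qed


lemma crossing_notV0: "crossing a \<Longrightarrow> a \<notin> V0"
  unfolding crossing_def V0_def using VAB by blast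

lemma Z_notV0: "z \<in> Z \<Longrightarrow> z \<notin> V0"
  unfolding V0_def using ZB VAB by blast

lemma path_props:
  assumes P: "walk R P" "hd P \<in> K"
  shows "\<forall>x\<in>set P. R\<^sup>*\<^sup>* c x"
proof
  fix x assume "x \<in> set P"
  then obtain k where k: "k < length P" "P!k = x" by (metis in_set_conv_nth)
  have "R\<^sup>*\<^sup>* (hd P) x" using walk_reach[OF P(1) k(1)] k(2) by simp
  moreover have "R\<^sup>*\<^sup>* c (hd P)" using P(2) unfolding K_def by blast
  ultimately show "R\<^sup>*\<^sup>* c x" by simp
qed

lemma walk_V0:
  assumes P: "walk R P" "2 \<le> length P"
  shows "set P \<subseteq> V0"
proof
  fix x assume "x \<in> set P"
  then obtain k where k: "k < length P" "P!k = x" by (metis in_set_conv_nth)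
  show "x \<in> V0"
  proof (cases "Suc k < length P")
    case True
    then have "R (P!k) (P!Suc k)" using P unfolding walk_def by blast
    then show ?thesis using RE k(2) by blast
  next
    case False
    then have kk: "k = Suc (k - 1)" "Suc (k-1) < length P" using k P(2) by auto
    then have "R (P!(k-1)) (P!Suc (k-1))" using P unfolding walk_def by blast
    then have "R (P!(k-1)) (P!k)" using kk(1) by simp
    then show ?thesis using RE k(2) by blast
  qed
qed

lemma cross_meet:
  assumes a1: "crossing a1" and a2: "crossing a2"
  shows "nbhd E a1 \<inter> nbhd E a2 \<inter> K \<noteq> {}"
proof
  assume disj: "nbhd E a1 \<inter> nbhd E a2 \<inter> K = {}"
  have a1A: "a1 \<in> A" and a2A: "a2 \<in> A" using a1 a2 unfolding crossing_def by auto
  obtain k1 where k1: "k1 \<in> nbhd E a1 \<inter> K" using a1 unfolding crossing_def by blast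
  obtain k2 where k2: "k2 \<in> nbhd E a2 \<inter> K" using a2 unfolding crossing_def by blast
  have "R\<^sup>*\<^sup>* c k1" "R\<^sup>*\<^sup>* c k2" using k1 k2 unfolding K_def by auto
  then have "R\<^sup>*\<^sup>* k1 k2" using rtranclp_sym[of R c k1] Rsym by (meson rtranclp_trans)
  then obtain xs where xs: "walk R xs" "hd xs = k1" "last xs = k2" using rtranclp_walk by metis
  obtain P where P: "walk R P" "hd P \<in> nbhd E a1 \<inter> K" "last P \<in> nbhd E a2 \<inter> K" "distinct P"
    "\<And>i j. i < length P \<Longrightarrow> j < length P \<Longrightarrow> R (P!i) (P!j) \<Longrightarrow> j = Suc i \<or> i = Suc j"
    "\<And>i. i < length P \<Longrightarrow> P!i \<in> nbhd E a1 \<inter> K \<Longrightarrow> i = 0"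
    "\<And>i. i < length P \<Longrightarrow> P!i \<in> nbhd E a2 \<inter> K \<Longrightarrow> i = length P - 1"
    using min_walk[of R xs "nbhd E a1 \<inter> K" "nbhd E a2 \<inter> K"] Rsym Rirr xs k1 k2 by metis
  have Pne: "P \<noteq> []" using P(1) unfolding walk_def by blast
  have hl: "hd P \<noteq> last P"
  proof
    assume "hd P = last P"
    then have "hd P \<in> nbhd E a1 \<inter> nbhd E a2 \<inter> K" using P(2,3) by simp
    then show False using disj by simp
  qed
  have l2: "2 \<le> length P"
  proof (rule ccontr)
    assume "\<not> 2 \<le> length P"
    moreover have "length P \<noteq> 0" using Pne by simp
    ultimately have "length P = 1" by linarith
    then have "hd P = last P" by (cases P) auto
    then show False using hl by simp
  qed
  have PV0: "set P \<subseteq> V0" using walk_V0[OF P(1) l2] .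
  have reach: "\<forall>x\<in>set P. R\<^sup>*\<^sup>* c x" using path_props[OF P(1)] P(2) by blast
  have hdB: "hd P \<in> B" "last P \<in> B" using P(2,3) K_sub by auto
  have l3: "3 \<le> length P"
  proof (rule ccontr)
    assume "\<not> 3 \<le> length P"
    then have "length P = 2" using l2 by simp
    then have "R (P!0) (P!1)" using P(1) unfolding walk_def by simp
    moreover have "P!0 = hd P" "P!1 = last P" using `length P = 2` Pne
      by (auto simp: hd_conv_nth last_conv_nth)
    ultimately have "E (hd P) (last P)" using RE by metis
    then show False using edge hdB VAB by blast
  qed
  have inK: "x \<in> B \<Longrightarrow> x \<in> set P \<Longrightarrow> x \<in> K" for x using reach unfolding K_def by blast
  have only1: "x = hd P" if x: "x \<in> set P" "x \<in> nbhd E a1" for x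
  proof -
    obtain k where k: "k < length P" "P!k = x" using x(1) by (metis in_set_conv_nth)
    have "x \<in> B" using nbhd_sub[OF i a1A] x(2) by blast
    then have "P!k \<in> nbhd E a1 \<inter> K" using inK x k by blast
    then have "k = 0" using P(6) k(1) by blast
    then show ?thesis using k Pne by (simp add: hd_conv_nth)
  qed
  have only2: "x = last P" if x: "x \<in> set P" "x \<in> nbhd E a2" for x
  proof -
    obtain k where k: "k < length P" "P!k = x" using x(1) by (metis in_set_conv_nth)
    have "x \<in> B" using nbhd_sub[OF i a2A] x(2) by blast
    then have "P!k \<in> nbhd E a2 \<inter> K" using inK x k by blast
    then have "k = length P - 1" using P(7) k(1) by blast
    then show ?thesis using k Pne by (simp add: last_conv_nth)
  qed
  have ipP: "ipath E P" unfolding ipath_def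
  proof (intro conjI allI impI ballI)
    show "distinct P" using P(4) .
    fix x y assume "padj P x y" then show "E x y" using padj_walk[OF P(1)] RE by blast
  next
    fix x y assume xy: "x \<in> set P" "y \<in> set P" "E x y"
    then have Rxy: "R x y" using PV0 unfolding R_def restr_def by blast
    obtain k where k: "k < length P" "P!k = x" using xy(1) by (metis in_set_conv_nth)
    obtain m where m: "m < length P" "P!m = y" using xy(2) by (metis in_set_conv_nth)
    have "m = Suc k \<or> k = Suc m" using P(5)[OF k(1) m(1)] Rxy k m by blast
    then show "padj P x y \<or> padj P y x"
    proof
      assume "m = Suc k" then have "padj P x y" unfolding padj_def using k m by blast
      then show ?thesis by blast
    next
      assume "k = Suc m" then have "padj P y x" unfolding padj_def using k m by blast
      then show ?thesis by blast
    qed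
  qed
  have a12: "a1 \<noteq> a2" using disj k1 by blast
  have a1V: "a1 \<notin> V0" "a2 \<notin> V0" using crossing_notV0 a1 a2 by auto
  have Ea: "E a1 (hd P)" "E a2 (last P)" using P(2,3) unfolding nbhd_def by auto
  have PZ: "\<not> E x z" "\<not> E z x" if x: "x \<in> set P" and z: "z \<in> Z" for x z
  proof -
    have xV: "x \<in> V0" using PV0 x by blast
    show "\<not> E x z"
    proof
      assume e: "E x z"
      have zB: "z \<in> B" using z ZB by blast
      then have "x \<in> A" using edge[OF e] VAB by blast
      then have "nbhd E x \<inter> Z = {}" using xV VAB unfolding V0_def by blast
      then show False using e z unfolding nbhd_def by blast
    qed
    then show "\<not> E z x" using sym by blast
  qed
  have hole: False if Q: "ipath E Q" "Q \<noteq> []" "hd Q = a2" "last Q = a1" "set Q \<inter> V0 = {}"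
    "set Q \<subseteq> V" "length Q \<ge> 3"
    "\<And>x y. x \<in> set P \<Longrightarrow> y \<in> set Q \<Longrightarrow> y \<noteq> a1 \<Longrightarrow> y \<noteq> a2 \<Longrightarrow> \<not> E x y" for Q
  proof -
    have ic: "is_induced_cycle V E (P @ Q)"
    proof (rule cycle_of_paths[OF ipP Q(1) Pne Q(2)])
      show "set P \<inter> set Q = {}" using PV0 Q(5) by blast
      show "E (last P) (hd Q)" using Ea sym Q(3) by simp
      show "E (last Q) (hd P)" using Ea Q(4) by simp
      show "3 \<le> length P + length Q" using l3 by simp
      show "set P \<union> set Q \<subseteq> V" using PV0 Q(6) VAB unfolding V0_def by blast
      fix x y assume xy: "x \<in> set P" "y \<in> set Q" "E x y \<or> E y x"
      then have Exy: "E x y" using sym by blast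
      show "(x = last P \<and> y = hd Q) \<or> (x = hd P \<and> y = last Q)"
      proof (cases "y = a2")
        case True
        then have "x \<in> nbhd E a2" using Exy sym unfolding nbhd_def by blast
        then show ?thesis using only2 xy(1) True Q(3) by blast
      next
        case False
        show ?thesis
        proof (cases "y = a1")
          case True
          then have "x \<in> nbhd E a1" using Exy sym unfolding nbhd_def by blast
          then show ?thesis using only1 xy(1) True Q(4) by blast
        next
          case False
          then show ?thesis using Q(8)[OF xy(1,2) False `y \<noteq> a2`] Exy by blast
        qed
      qed
    qed
    have "is_hole V E (P @ Q)" using ic l3 Q(7) unfolding is_hole_def by simp
    then have "length (P @ Q) = 4" using hf unfolding holefree_def by blast
    then show False using l3 Q(7) by simp
  qed
  show False
  proof (cases "\<exists>z. z \<in> nbhd E a1 \<and> z \<in> nbhd E a2 \<and> z \<in> Z")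
    case True
    then obtain z where z: "z \<in> nbhd E a1" "z \<in> nbhd E a2" "z \<in> Z" by blast
    have zB: "z \<in> B" using z(3) ZB by blast
    have Ez: "E a2 z" "E z a1" using z sym unfolding nbhd_def by auto
    show False
    proof (rule hole[of "[a2, z, a1]"])
      show "ipath E [a2, z, a1]" unfolding ipath_def
      proof (intro conjI allI impI ballI)
        show "distinct [a2, z, a1]" using a12 a1A a2A zB VAB by auto
        fix x y assume "padj [a2, z, a1] x y" then show "E x y" using Ez by auto
      next
        fix x y assume xy: "x \<in> set [a2, z, a1]" "y \<in> set [a2, z, a1]" "E x y"
        have nAA: "\<not> E a1 a2" "\<not> E a2 a1" using edge a1A a2A VAB by blast+
        show "padj [a2, z, a1] x y \<or> padj [a2, z, a1] y x"
          using xy nAA irr by auto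
      qed
      show "set [a2, z, a1] \<inter> V0 = {}" using a1V Z_notV0[OF z(3)] by auto
      show "set [a2, z, a1] \<subseteq> V" using a1A a2A zB VAB by auto
      fix x y assume "x \<in> set P" "y \<in> set [a2, z, a1]" "y \<noteq> a1" "y \<noteq> a2"
      then show "\<not> E x y" using PZ z(3) by auto
    qed auto
  next
    case False
    have "\<not> (\<exists>p. Z = {p})"
    proof
      assume "\<exists>p. Z = {p}"
      then obtain p where p: "Z = {p}" by blast
      then have "p \<in> nbhd E a1" "p \<in> nbhd E a2" using a1 a2 unfolding crossing_def by auto
      then show False using False p by simp
    qed
    then obtain z0 where z0: "z0 \<in> A" "Z = nbhd E z0" using Zform by blast
    obtain z1 where z1: "z1 \<in> nbhd E a1" "z1 \<in> Z" using a1 unfolding crossing_def by blast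
    obtain z2 where z2: "z2 \<in> nbhd E a2" "z2 \<in> Z" using a2 unfolding crossing_def by blast
    have z1n: "z1 \<notin> nbhd E a2" using False z1 by blast
    have z2n: "z2 \<notin> nbhd E a1" using False z2 by blast
    have zB: "z1 \<in> B" "z2 \<in> B" using z1 z2 ZB by auto
    have z0a: "z0 \<noteq> a1" "z0 \<noteq> a2"
    proof -
      show "z0 \<noteq> a1"
      proof
        assume "z0 = a1" then have "nbhd E a1 = Z" using z0 by simp
        then show False using k1 KZ by blast
      qed
      show "z0 \<noteq> a2"
      proof
        assume "z0 = a2" then have "nbhd E a2 = Z" using z0 by simp
        then show False using k2 KZ by blast
      qed
    qed
    have z0V: "z0 \<notin> V0" using z0 Zne VAB unfolding V0_def by blast
    have Ez: "E a2 z2" "E z2 z0" "E z0 z1" "E z1 a1" using z1 z2 z0 sym unfolding nbhd_def by auto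
    have nE: "\<not> E a2 z1" "\<not> E z1 a2" "\<not> E a1 z2" "\<not> E z2 a1" using z1n z2n sym unfolding nbhd_def by auto
    have nAA: "\<not> E a1 a2" "\<not> E a2 a1" "\<not> E z0 a1" "\<not> E a1 z0" "\<not> E z0 a2" "\<not> E a2 z0" "\<not> E z1 z2" "\<not> E z2 z1"
      using edge a1A a2A z0(1) zB VAB by blast+
    have z12: "z1 \<noteq> z2"
    proof
      assume "z1 = z2" then show False using z1n z2 by simp
    qed
    show False
    proof (rule hole[of "[a2, z2, z0, z1, a1]"])
      show "ipath E [a2, z2, z0, z1, a1]" unfolding ipath_def
      proof (intro conjI allI impI ballI)
        show "distinct [a2, z2, z0, z1, a1]" using a12 a1A a2A zB z0 z0a z12 VAB by auto
        fix x y assume "padj [a2, z2, z0, z1, a1] x y" then show "E x y" using Ez by auto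
      next
        fix x y assume xy: "x \<in> set [a2, z2, z0, z1, a1]" "y \<in> set [a2, z2, z0, z1, a1]" "E x y"
        show "padj [a2, z2, z0, z1, a1] x y \<or> padj [a2, z2, z0, z1, a1] y x"
          using xy nAA nE irr by auto
      qed
      show "set [a2, z2, z0, z1, a1] \<inter> V0 = {}" using a1V z0V Z_notV0 z1(2) z2(2) by auto
      show "set [a2, z2, z0, z1, a1] \<subseteq> V" using a1A a2A zB z0 VAB by auto
      fix x y assume xy: "x \<in> set P" "y \<in> set [a2, z2, z0, z1, a1]" "y \<noteq> a1" "y \<noteq> a2"
      show "\<not> E x y"
      proof (cases "y = z0")
        case True
        show ?thesis
        proof
          assume e: "E x y"
          then have "x \<in> Z" using True z0 sym unfolding nbhd_def by auto
          then show False using xy(1) PV0 Z_notV0 by blast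
        qed
      next
        case False
        then have "y \<in> Z" using xy z1 z2 by auto
        then show ?thesis using PZ xy(1) by blast
      qed
    qed auto
  qed
qed


lemma finA: "finite A" using VAB by (meson finite_Un)

lemma fam_min:
  assumes lam: "laminar E Aj" and Aj: "Aj \<subseteq> A" and ne: "\<exists>a\<in>Aj. crossing a"
  shows "\<exists>m\<in>Aj. crossing m \<and> (\<forall>a\<in>Aj. crossing a \<longrightarrow> nbhd E m \<subseteq> nbhd E a)"
proof -
  let ?I = "{a \<in> Aj. crossing a}"
  have "?I \<subseteq> A" using Aj by blast
  then have fin: "finite ?I" using finite_subset finA by blast
  have ch: "nbhd E a \<subseteq> nbhd E a' \<or> nbhd E a' \<subseteq> nbhd E a" if aa: "a \<in> ?I" "a' \<in> ?I" for a a'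
  proof (cases "a = a'")
    case True then show ?thesis by simp
  next
    case False
    have "nbhd E a \<inter> nbhd E a' \<inter> K \<noteq> {}" using cross_meet aa by blast
    then have "nbhd E a \<inter> nbhd E a' \<noteq> {}" by blast
    moreover have "a \<in> Aj" "a' \<in> Aj" using aa by auto
    ultimately show ?thesis using laminar_sub[OF lam _ _ False] by blast
  qed
  have Ine: "?I \<noteq> {}" using ne by blast
  obtain m where m: "m \<in> ?I" "\<forall>a\<in>?I. nbhd E m \<subseteq> nbhd E a"
    using chain_min[of ?I "nbhd E", OF fin Ine ch] by blast
  then show ?thesis by blast
qed

lemma common_point: "\<exists>k0\<in>K. \<forall>a. crossing a \<longrightarrow> k0 \<in> nbhd E a"
proof -
  have AA: "A = A1 \<union> A2" using inst_A[OF i] by blast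
  have lams: "laminar E A1" "laminar E A2" using inst_lam[OF i] by auto
  have cA: "crossing a \<Longrightarrow> a \<in> A1 \<or> a \<in> A2" for a using AA unfolding crossing_def by blast
  show ?thesis
  proof (cases "\<exists>a\<in>A1. crossing a")
    case True
    obtain m1 where m1: "m1 \<in> A1" "crossing m1" "\<forall>a\<in>A1. crossing a \<longrightarrow> nbhd E m1 \<subseteq> nbhd E a"
      using fam_min[OF lams(1) _ True] AA by blast
    show ?thesis
    proof (cases "\<exists>a\<in>A2. crossing a")
      case True
      obtain m2 where m2: "m2 \<in> A2" "crossing m2" "\<forall>a\<in>A2. crossing a \<longrightarrow> nbhd E m2 \<subseteq> nbhd E a"
        using fam_min[OF lams(2) _ True] AA by blast
      obtain k0 where k0: "k0 \<in> nbhd E m1" "k0 \<in> nbhd E m2" "k0 \<in> K" using cross_meet[OF m1(2) m2(2)] by blast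
      show ?thesis
      proof (intro bexI[OF _ k0(3)] allI impI)
        fix a assume "crossing a"
        then show "k0 \<in> nbhd E a" using cA m1(3) m2(3) k0 by blast
      qed
    next
      case False
      obtain k0 where k0: "k0 \<in> nbhd E m1" "k0 \<in> K" using m1(2) unfolding crossing_def by blast
      show ?thesis
      proof (intro bexI[OF _ k0(2)] allI impI)
        fix a assume "crossing a"
        then show "k0 \<in> nbhd E a" using cA m1(3) k0 False by blast
      qed
    qed
  next
    case False
    show ?thesis
    proof (cases "\<exists>a\<in>A2. crossing a")
      case True
      obtain m2 where m2: "m2 \<in> A2" "crossing m2" "\<forall>a\<in>A2. crossing a \<longrightarrow> nbhd E m2 \<subseteq> nbhd E a"
        using fam_min[OF lams(2) _ True] AA by blast
      obtain k0 where k0: "k0 \<in> nbhd E m2" "k0 \<in> K" using m2(2) unfolding crossing_def by blast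
      show ?thesis
      proof (intro bexI[OF _ k0(2)] allI impI)
        fix a assume "crossing a"
        then show "k0 \<in> nbhd E a" using cA m2(3) k0 `\<not> (\<exists>a\<in>A1. crossing a)` by blast
      qed
    next
      case False
      then show ?thesis using cK cA `\<not> (\<exists>a\<in>A1. crossing a)` by blast
    qed
  qed
qed

lemma single_aux:
  assumes Ks: "K \<subseteq> {c}" and lj: "laminar E Aj" and lk: "laminar E Ak" and AA: "A = Aj \<union> Ak"
    and z0: "z0 \<in> Aj" "Z = nbhd E z0"
  shows "\<exists>b'\<in>Z. \<forall>a. crossing a \<longrightarrow> b' \<in> nbhd E a"
proof -
  have cN: "crossing a \<Longrightarrow> c \<in> nbhd E a" for a using Ks unfolding crossing_def by blast
  have j: "Z \<subseteq> nbhd E a" if a: "a \<in> Aj" "crossing a" for a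
  proof -
    have az: "a \<noteq> z0"
    proof
      assume "a = z0"
      then have "c \<in> Z" using cN[OF a(2)] z0 by simp
      then show False using c by simp
    qed
    have "nbhd E a \<subseteq> nbhd E z0 \<or> nbhd E z0 \<subseteq> nbhd E a \<or> nbhd E a \<inter> nbhd E z0 = {}"
      using laminar_sub[OF lj a(1) z0(1) az] .
    moreover have "\<not> nbhd E a \<subseteq> nbhd E z0" using cN[OF a(2)] c z0 by blast
    moreover have "nbhd E a \<inter> nbhd E z0 \<noteq> {}" using a(2) z0 unfolding crossing_def by simp
    ultimately show ?thesis using z0 by blast
  qed
  show ?thesis
  proof (cases "\<exists>a\<in>Ak. crossing a")
    case True
    obtain m where m: "m \<in> Ak" "crossing m" "\<forall>a\<in>Ak. crossing a \<longrightarrow> nbhd E m \<subseteq> nbhd E a"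
      using fam_min[OF lk _ True] AA by blast
    obtain z where z: "z \<in> nbhd E m" "z \<in> Z" using m(2) unfolding crossing_def by blast
    show ?thesis
    proof (intro bexI[OF _ z(2)] allI impI)
      fix a assume a: "crossing a"
      then have "a \<in> Aj \<or> a \<in> Ak" using AA unfolding crossing_def by blast
      then show "z \<in> nbhd E a" using j a m(3) z by blast
    qed
  next
    case False
    obtain z where z: "z \<in> Z" using Zne by blast
    show ?thesis
    proof (intro bexI[OF _ z] allI impI)
      fix a assume a: "crossing a"
      then have "a \<in> Aj" using AA False unfolding crossing_def by blast
      then show "z \<in> nbhd E a" using j a z by blast
    qed
  qed
qed

lemma single_case:
  assumes Ks: "K \<subseteq> {c}"
  shows "\<exists>b'\<in>B. good E A c b'"
proof -
  have pt: "\<exists>b'\<in>Z. \<forall>a. crossing a \<longrightarrow> b' \<in> nbhd E a"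
  proof (cases "\<exists>p. Z = {p}")
    case True
    then obtain p where p: "Z = {p}" by blast
    show ?thesis
    proof (intro bexI[of _ p] allI impI)
      fix a assume "crossing a" then show "p \<in> nbhd E a" using p unfolding crossing_def by blast
    qed (use p in simp)
  next
    case False
    then obtain z0 where z0: "z0 \<in> A" "Z = nbhd E z0" using Zform by blast
    have AA: "A = A1 \<union> A2" using inst_A[OF i] by blast
    have lams: "laminar E A1" "laminar E A2" using inst_lam[OF i] by auto
    show ?thesis
    proof (cases "z0 \<in> A1")
      case True
      then show ?thesis using single_aux[OF Ks lams(1) lams(2) AA True z0(2)] by blast
    next
      case False
      then have "z0 \<in> A2" using z0 AA by blast
      moreover have "A = A2 \<union> A1" using AA by blast
      ultimately show ?thesis using single_aux[OF Ks lams(2) lams(1)] z0(2) by blast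
    qed
  qed
  then obtain b' where b': "b' \<in> Z" "\<forall>a. crossing a \<longrightarrow> b' \<in> nbhd E a" by blast
  have "good E A c b'" unfolding good_def
  proof (intro conjI ballI impI)
    show "c \<noteq> b'" using b'(1) c by blast
    fix a assume a: "a \<in> A" "c \<in> nbhd E a"
    show "nbhd E a \<subseteq> {c} \<or> b' \<in> nbhd E a"
    proof (cases "nbhd E a \<inter> Z = {}")
      case True
      then have "nbhd E a \<subseteq> K" using closure[OF cK a(1) a(2)] by blast
      then show ?thesis using Ks by blast
    next
      case False
      then have "crossing a" using a cK unfolding crossing_def by blast
      then show ?thesis using b'(2) by blast
    qed
  qed
  then show ?thesis using b'(1) ZB by blast
qed

lemma step:
  assumes IH: "\<And>V' E' B' Z'. B' \<subset> B \<Longrightarrow> inst V' E' A B' A1 A2 \<Longrightarrow> holefree V' E' \<Longrightarrow> Z' \<noteq> {} \<Longrightarrow> Z' \<subseteq> B'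
     \<Longrightarrow> \<not> B' \<subseteq> Z' \<Longrightarrow> (\<exists>p. Z' = {p}) \<or> (\<exists>z0\<in>A. Z' = nbhd E' z0) \<Longrightarrow> \<exists>b\<in>B' - Z'. \<exists>b'\<in>B'. good E' A b b'"
  shows "\<exists>b\<in>B - Z. \<exists>b'\<in>B. good E A b b'"
proof -
  obtain k0 where k0: "k0 \<in> K" "\<forall>a. crossing a \<longrightarrow> k0 \<in> nbhd E a" using common_point by blast
  show ?thesis
  proof (cases "K \<subseteq> {k0}")
    case True
    then have "K \<subseteq> {c}" using cK by blast
    then show ?thesis using single_case c by blast
  next
    case False
    let ?V' = "A \<union> K"
    let ?E' = "restr E ?V'"
    have KB: "K \<subset> B" using K_sub Zne ZB by blast
    have i': "inst ?V' ?E' A K A1 A2" using inst_restr[OF i] KB by blast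
    have hf': "holefree ?V' ?E'" using holefree_restr[OF g _ hf] KB VAB by blast
    obtain b b' where bb: "b \<in> K - {k0}" "b' \<in> K" "good ?E' A b b'"
      using IH[OF KB i' hf', of "{k0}"] k0(1) False by blast
    have "good E A b b'" unfolding good_def
    proof (intro conjI ballI impI)
      show "b \<noteq> b'" using bb(3) unfolding good_def by blast
      fix a assume a: "a \<in> A" "b \<in> nbhd E a"
      have e: "nbhd ?E' a = nbhd E a \<inter> K" using nbhd_restr[OF i a(1)] .
      have "nbhd ?E' a \<subseteq> {b} \<or> b' \<in> nbhd ?E' a" using bb(1,3) a e unfolding good_def by blast
      then show "nbhd E a \<subseteq> {b} \<or> b' \<in> nbhd E a"
      proof
        assume sb: "nbhd ?E' a \<subseteq> {b}"
        show ?thesis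
        proof (cases "nbhd E a \<inter> Z = {}")
          case True
          then have "nbhd E a \<subseteq> K" using closure[OF _ a(1) a(2)] bb(1) by blast
          then show ?thesis using sb e by blast
        next
          case False
          then have "crossing a" using a bb(1) unfolding crossing_def by blast
          then have "k0 \<in> nbhd ?E' a" using k0 e by blast
          then show ?thesis using sb bb(1) by blast
        qed
      next
        assume "b' \<in> nbhd ?E' a" then show ?thesis using e by blast
      qed
    qed
    then show ?thesis using bb(1,2) K_sub by blast
  qed
qed

end



lemma good_exists:
  assumes "finite B" "inst V E A B A1 A2" "holefree V E" "Z \<noteq> {}" "Z \<subseteq> B" "\<not> B \<subseteq> Z"
    "(\<exists>p. Z = {p}) \<or> (\<exists>z0\<in>A. Z = nbhd E z0)"
  shows "\<exists>b\<in>B - Z. \<exists>b'\<in>B. good E A b b'"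
  using assms
proof (induction B arbitrary: V E Z rule: finite_psubset_induct)
  case (psubset B)
  obtain c where c: "c \<in> B" "c \<notin> Z" using psubset.prems(5) by blast
  interpret mlsetup V E A B A1 A2 Z c
    by (rule mlsetup.intro[OF psubset.prems(1) psubset.prems(2) psubset.prems(3) psubset.prems(4) c(1) c(2) psubset.prems(6)])
  show ?case
  proof (rule step)
    fix V' E' B' Z' assume "B' \<subset> B" "inst V' E' A B' A1 A2" "holefree V' E'" "Z' \<noteq> {}" "Z' \<subseteq> B'"
      "\<not> B' \<subseteq> Z'" "(\<exists>p. Z' = {p}) \<or> (\<exists>z0\<in>A. Z' = nbhd E' z0)"
    then show "\<exists>b\<in>B' - Z'. \<exists>b'\<in>B'. good E' A b b'" using psubset.IH[of B' V' E' Z'] by simp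
  qed
qed

lemma connected_small: "S \<subseteq> {x} \<Longrightarrow> connected_set T S"
  unfolding connected_set_def by auto

lemma AB:
  assumes "finite B" "inst V E A B A1 A2" "holefree V E"
  shows "\<exists>T. is_tree B T \<and> subprop B T E A"
  using assms
proof (induction B arbitrary: V E rule: finite_psubset_induct)
  case (psubset B)
  note i = psubset.prems(1) and hf = psubset.prems(2)
  have VAB: "V = A \<union> B" "A \<inter> B = {}" "finite V" using inst_V[OF i] by auto
  have g: "graph V E" using inst_graph[OF i] .
  show ?case
  proof (cases "\<exists>x y. x \<in> B \<and> y \<in> B \<and> x \<noteq> y")
    case True
    then obtain x y where xy: "x \<in> B" "y \<in> B" "x \<noteq> y" by blast
    have "\<exists>b\<in>B - {x}. \<exists>b'\<in>B. good E A b b'"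
      using good_exists[OF psubset.hyps(1) i hf, of "{x}"] xy by blast
    then obtain b b' where bb: "b \<in> B" "b' \<in> B" "good E A b b'" by blast
    have bb': "b \<noteq> b'" and gd: "\<And>a. a \<in> A \<Longrightarrow> b \<in> nbhd E a \<Longrightarrow> nbhd E a \<subseteq> {b} \<or> b' \<in> nbhd E a"
      using bb(3) unfolding good_def by auto
    let ?B' = "B - {b}"
    let ?V' = "A \<union> ?B'"
    let ?E' = "restr E ?V'"
    have sub: "?B' \<subset> B" using bb(1) by blast
    have i': "inst ?V' ?E' A ?B' A1 A2" by (rule inst_restr[OF i]) blast
    have "?V' \<subseteq> V" using VAB(1) by auto
    then have hf': "holefree ?V' ?E'" by (rule holefree_restr[OF g _ hf])
    have "\<exists>T. is_tree ?B' T \<and> subprop ?B' T ?E' A" by (rule psubset.IH[OF sub i' hf'])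
    then obtain T' where T': "is_tree ?B' T'" "subprop ?B' T' ?E' A" by blast
    let ?T = "addleaf T' b b'"
    have ins: "insert b ?B' = B" using bb(1) by blast
    have t0: "is_tree (insert b ?B') ?T" by (rule tree_add_leaf[OF T'(1)]) (use bb bb' in auto)
    then have t: "is_tree B ?T" by (simp only: ins)
    have gT': "graph ?B' T'" using T'(1) unfolding is_tree_def by blast
    have sp: "subprop B ?T E A" unfolding subprop_def subtree_vertex_set_def
    proof (intro ballI conjI)
      fix a assume a: "a \<in> A"
      show "nbhd E a \<subseteq> B" using nbhd_sub[OF i a] .
      have e: "nbhd ?E' a = nbhd E a - {b}" using nbhd_restr[OF i a, of ?B'] nbhd_sub[OF i a] by blast
      have "subtree_vertex_set ?B' T' (nbhd ?E' a)" using T'(2) a unfolding subprop_def by blast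
      then have c': "connected_set T' (nbhd E a - {b})"
        unfolding subtree_vertex_set_def e by blast
      show "connected_set ?T (nbhd E a)"
      proof (cases "b \<in> nbhd E a")
        case False
        then have ee: "nbhd E a - {b} = nbhd E a" by blast
        have "connected_set ?T (nbhd E a - {b})" by (rule connected_mono_rel[OF c']) (simp add: addleaf_def)
        then show ?thesis using ee by simp
      next
        case True
        then have "nbhd E a \<subseteq> {b} \<or> b' \<in> nbhd E a" using gd a by blast
        then show ?thesis
        proof
          assume "nbhd E a \<subseteq> {b}" then show ?thesis by (rule connected_small)
        next
          assume b'a: "b' \<in> nbhd E a"
          let ?S = "nbhd E a"
          let ?R = "\<lambda>u v. u \<in> ?S \<and> v \<in> ?S \<and> ?T u v"
          have symT: "?T x y \<Longrightarrow> ?T y x" for x y using graph_sym[OF gT'] unfolding addleaf_def by blast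
          have r: "?R\<^sup>*\<^sup>* b' x" if x: "x \<in> ?S" for x
          proof (cases "x = b")
            case True
            have "?R b' b" using b'a `b \<in> ?S` unfolding addleaf_def by simp
            then show ?thesis using True by (simp add: r_into_rtranclp)
          next
            case False
            then have "x \<in> ?S - {b}" using x by blast
            moreover have "b' \<in> ?S - {b}" using b'a bb' by blast
            ultimately have "(\<lambda>u v. u \<in> ?S - {b} \<and> v \<in> ?S - {b} \<and> T' u v)\<^sup>*\<^sup>* b' x"
              using c' unfolding connected_set_def by blast
            then show ?thesis
            proof (induction rule: rtranclp_induct)
              case base then show ?case by simp
            next
              case (step y z)
              then have "?R y z" unfolding addleaf_def by simp
              then show ?case using step.IH by (simp add: rtranclp.rtrancl_into_rtrancl)
            qed
          qed
          show ?thesis by (rule connected_via_root[OF symT r])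
        qed
      qed
    qed
    show ?thesis using t sp by blast
  next
    case False
    then have small: "\<And>x y. x \<in> B \<Longrightarrow> y \<in> B \<Longrightarrow> x = y" by blast
    let ?T = "\<lambda>x y::'a. False"
    have gr: "graph B ?T" unfolding graph_def using VAB by simp
    have cB: "connected_set ?T B" unfolding connected_set_def using small by (metis rtranclp.rtrancl_refl)
    have nc: "\<nexists>vs. is_cycle B ?T vs"
    proof
      assume "\<exists>vs. is_cycle B ?T vs"
      then obtain vs where vs: "is_cycle B ?T vs" by blast
      then have l: "3 \<le> length vs" and d: "distinct vs" and sB: "set vs \<subseteq> B" unfolding is_cycle_def by auto
      have l01: "0 < length vs" "1 < length vs" using l by linarith+
      have "vs!0 \<in> set vs" "vs!1 \<in> set vs" using l01 nth_mem by blast+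
      then have "vs!0 \<in> B" "vs!1 \<in> B" using sB by blast+
      moreover have "vs!0 \<noteq> vs!1" using nth_eq_iff_index_eq[OF d l01] by simp
      ultimately show False using small by metis
    qed
    have t: "is_tree B ?T" unfolding is_tree_def using gr cB nc by blast
    have sp: "subprop B ?T E A" unfolding subprop_def subtree_vertex_set_def
    proof (intro ballI conjI)
      fix a assume a: "a \<in> A"
      show "nbhd E a \<subseteq> B" using nbhd_sub[OF i a] .
      have "\<And>u v. u \<in> nbhd E a \<Longrightarrow> v \<in> nbhd E a \<Longrightarrow> u = v" using small nbhd_sub[OF i a] by (meson subsetD)
      then show "connected_set ?T (nbhd E a)" unfolding connected_set_def by (metis rtranclp.rtrancl_refl)
    qed
    show ?thesis using t sp by blast
  qed
qed

theorem mainTheorem17: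
  fixes V :: "'v set" and E :: "'v \<Rightarrow> 'v \<Rightarrow> bool" and A B A1 A2 :: "'v set"
  assumes "bipartite_with V E A B"
    and "A = A1 \<union> A2" and "A1 \<inter> A2 = {}"
    and "laminar E A1" and "laminar E A2"
  shows "(\<forall>vs. is_hole V E vs \<longrightarrow> length vs = 4) \<longleftrightarrow>
         (\<exists>T. is_tree B T \<and> (\<forall>a\<in>A. subtree_vertex_set B T (nbhd E a)))"
proof -
  have i: "inst V E A B A1 A2" using assms unfolding inst_def by blast
  have fB: "finite B" using inst_V[OF i] by blast
  show ?thesis
  proof
    assume "\<forall>vs. is_hole V E vs \<longrightarrow> length vs = 4"
    then have "holefree V E" unfolding holefree_def .
    then show "\<exists>T. is_tree B T \<and> (\<forall>a\<in>A. subtree_vertex_set B T (nbhd E a))"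
      using AB[OF fB i] unfolding subprop_def by blast
  next
    assume "\<exists>T. is_tree B T \<and> (\<forall>a\<in>A. subtree_vertex_set B T (nbhd E a))"
    then obtain T where "is_tree B T" "subprop B T E A" unfolding subprop_def by blast
    then have "holefree V E" using BA[OF fB i] by blast
    then show "\<forall>vs. is_hole V E vs \<longrightarrow> length vs = 4" unfolding holefree_def .
  qed
qed


end
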